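(* Fix $l,r>0$, $0<\alpha<\beta<1$, diffusion constants $D_1,D_2>0$ (so $\delta=\frac{D_2-D_1}{D_2+D_1}$) and $V\in\mathbb{R}$. Then there exists a unique reversal permanent charge, i.e. a unique $Q_0\in\mathbb{R}$ for which there is $A\in(0,A_M)$ with $G_1(Q_0,A,\delta)=V$ and $G_2(Q_0,A,\delta)=0$, if and only if $|V|<\big|\ln\frac{l}{r}\big|$.
   Context: Setting: steady zero-current Poisson–Nernst–Planck model for two ion species ($n=2$) with valences $z_1=-z_2=1$, dimensionless transmembrane potential $V$, electroneutral boundary concentrations $l$ (left) and $r$ (right), permanent charge $2Q_0$ on $(a,b)$ and $0$ elsewhere on $(0,1)$; $\alpha=H(a)/H(1)$, $\beta=H(b)/H(1)$ with $H(x)=\int_0^x ds/h(s)$, $h>0$ the cross-sectional area. A reversal permanent charge is a permanent charge producing zero total current at potential $V$; in the singular limit this is reduced to the algebraic system $G_1=V$, $G_2=0$ below. For $Q_0\in\mathbb{R}$, $A>0$ define $B=\frac{1-\beta}{\alpha}(l-A)+r$, $A_M=l+\frac{\alpha}{1-\beta}r$, $S_a=\sqrt{Q_0^2+A^2}$, $S_b=\sqrt{Q_0^2+B^2}$, $N=A-l+S_a-S_b$, $G_1(Q_0,A,\delta)=\delta\Big(\ln\frac{S_a+\delta Q_0}{S_b+\delta Q_0}+\ln\frac{l}{r}\Big)-(1+\delta)\ln\frac{A}{B}+\ln\frac{S_a-Q_0}{S_b-Q_0}$, $G_2(Q_0,A,\delta)=\delta Q_0\ln\frac{S_a+\delta Q_0}{S_b+\delta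 Q_0}-N$. *)

theory Defs
  imports Complex_Main
begin

text \<open>Quantities of the zero-current PNP reduced system (n = 2, z1 = -z2 = 1).
  Parameters: l, r boundary concentrations, alpha = H(a)/H(1), beta = H(b)/H(1).\<close>

definition pnp_B :: "real \<Rightarrow> real \<Rightarrow> real \<Rightarrow> real \<Rightarrow> real \<Rightarrow> real" where
  "pnp_B l r \<alpha> \<beta> A = (1 - \<beta>) / \<alpha> * (l - A) + r"

definition pnp_AM :: "real \<Rightarrow> real \<Rightarrow> real \<Rightarrow> real \<Rightarrow> real" where
  "pnp_AM l r \<alpha> \<beta> = l + \<alpha> / (1 - \<beta>) * r"

definition pnp_Sa :: "real \<Rightarrow> real \<Rightarrow> real" where
  "pnp_Sa Q0 A = sqrt (Q0\<^sup>2 + A\<^sup>2)"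

definition pnp_Sb :: "real \<Rightarrow> real \<Rightarrow> real \<Rightarrow> real \<Rightarrow> real \<Rightarrow> real \<Rightarrow> real" where
  "pnp_Sb l r \<alpha> \<beta> Q0 A = sqrt (Q0\<^sup>2 + (pnp_B l r \<alpha> \<beta> A)\<^sup>2)"

definition pnp_N :: "real \<Rightarrow> real \<Rightarrow> real \<Rightarrow> real \<Rightarrow> real \<Rightarrow> real \<Rightarrow> real" where
  "pnp_N l r \<alpha> \<beta> Q0 A = A - l + pnp_Sa Q0 A - pnp_Sb l r \<alpha> \<beta> Q0 A"

definition pnp_G1 :: "real \<Rightarrow> real \<Rightarrow> real \<Rightarrow> real \<Rightarrow> real \<Rightarrow> real \<Rightarrow> real \<Rightarrow> real" where
  "pnp_G1 l r \<alpha> \<beta> Q0 A \<delta> =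
     (let Sa = pnp_Sa Q0 A; Sb = pnp_Sb l r \<alpha> \<beta> Q0 A; B = pnp_B l r \<alpha> \<beta> A in
      \<delta> * (ln ((Sa + \<delta> * Q0) / (Sb + \<delta> * Q0)) + ln (l / r))
      - (1 + \<delta>) * ln (A / B) + ln ((Sa - Q0) / (Sb - Q0)))"

definition pnp_G2 :: "real \<Rightarrow> real \<Rightarrow> real \<Rightarrow> real \<Rightarrow> real \<Rightarrow> real \<Rightarrow> real \<Rightarrow> real" where
  "pnp_G2 l r \<alpha> \<beta> Q0 A \<delta> =
     (let Sa = pnp_Sa Q0 A; Sb = pnp_Sb l r \<alpha> \<beta> Q0 A in
      \<delta> * Q0 * ln ((Sa + \<delta> * Q0) / (Sb + \<delta> * Q0)) - pnp_N l r \<alpha> \<beta> Q0 A)"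

definition reversal_charge :: "real \<Rightarrow> real \<Rightarrow> real \<Rightarrow> real \<Rightarrow> real \<Rightarrow> real \<Rightarrow> real \<Rightarrow> bool" where
  "reversal_charge l r \<alpha> \<beta> \<delta> V Q0 \<longleftrightarrow>
     (\<exists>A. 0 < A \<and> A < pnp_AM l r \<alpha> \<beta> \<and>
          pnp_G1 l r \<alpha> \<beta> Q0 A \<delta> = V \<and> pnp_G2 l r \<alpha> \<beta> Q0 A \<delta> = 0)"

end

theory Submission
  imports Defs
begin


lemma mvt_sym:
  fixes f f' :: "real \<Rightarrow> real"
  assumes "\<And>s. min a b \<le> s \<Longrightarrow> s \<le> max a b \<Longrightarrow> DERIV f s :> f' s"
  shows "\<exists>z. \<bar>z - a\<bar> \<le> \<bar>b - a\<bar> \<and> min a b \<le> z \<and> z \<le> max a b \<and> f b - f a = (b - a) * f' z"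
proof (cases "a < b")
  case True
  then obtain z where "a < z" "z < b" "f b - f a = (b - a) * f' z"
    using MVT2[of a b f f'] assms by auto
  then show ?thesis using True by (intro exI[of _ z]) auto
next
  case False
  show ?thesis
  proof (cases "b < a")
    case True
    then obtain z where "b < z" "z < a" "f a - f b = (a - b) * f' z"
      using MVT2[of b a f f'] assms by auto
    then show ?thesis using True by (intro exI[of _ z]) (auto simp: algebra_simps)
  next
    case False
    with \<open>\<not> a < b\<close> have "a = b" by auto
    then show ?thesis by (intro exI[of _ a]) auto
  qed
qed

lemma two_var_decomp:
  fixes f fx fy :: "real \<Rightarrow> real \<Rightarrow> real" and y :: "real \<Rightarrow> real"
  assumes yI: "\<And>x. lo < y x \<and> y x < hi"
    and dx: "\<And>x z. lo < z \<Longrightarrow> z < hi \<Longrightarrow> ((\<lambda>x. f x z) has_real_derivative fx x z) (at x)"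
    and dy: "\<And>x z. lo < z \<Longrightarrow> z < hi \<Longrightarrow> ((\<lambda>z. f x z) has_real_derivative fy x z) (at z)"
    and yc: "isCont y x0"
    and cx: "isCont (\<lambda>p. fx (fst p) (snd p)) (x0, y x0)"
    and cy: "isCont (\<lambda>p. fy (fst p) (snd p)) (x0, y x0)"
  shows "\<exists>e1 e2. (e1 \<longlongrightarrow> 0) (at x0) \<and> (e2 \<longlongrightarrow> 0) (at x0) \<and>
     (\<forall>x. f x (y x) - f x0 (y x0) = (fx x0 (y x0) + e1 x) * (x - x0) + (fy x0 (y x0) + e2 x) * (y x - y x0))"
proof -
  have "\<forall>x. \<exists>z. \<bar>z - x0\<bar> \<le> \<bar>x - x0\<bar> \<and> f x (y x) - f x0 (y x) = (x - x0) * fx z (y x)"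
  proof
    fix x
    show "\<exists>z. \<bar>z - x0\<bar> \<le> \<bar>x - x0\<bar> \<and> f x (y x) - f x0 (y x) = (x - x0) * fx z (y x)"
      using mvt_sym[of x0 x "\<lambda>s. f s (y x)" "\<lambda>s. fx s (y x)"] dx yI by blast
  qed
  then obtain xi where xi: "\<And>x. \<bar>xi x - x0\<bar> \<le> \<bar>x - x0\<bar>"
    "\<And>x. f x (y x) - f x0 (y x) = (x - x0) * fx (xi x) (y x)" by metis
  have "\<forall>x. \<exists>z. \<bar>z - y x0\<bar> \<le> \<bar>y x - y x0\<bar> \<and> f x0 (y x) - f x0 (y x0) = (y x - y x0) * fy x0 z"
  proof
    fix x
    have "\<And>s. min (y x0) (y x) \<le> s \<Longrightarrow> s \<le> max (y x0) (y x) \<Longrightarrow> ((\<lambda>z. f x0 z) has_real_derivative fy x0 s) (at s)"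
    proof -
      fix s assume "min (y x0) (y x) \<le> s" "s \<le> max (y x0) (y x)"
      then have "lo < s" "s < hi" using yI[of x0] yI[of x] by auto
      then show "((\<lambda>z. f x0 z) has_real_derivative fy x0 s) (at s)" using dy by auto
    qed
    then show "\<exists>z. \<bar>z - y x0\<bar> \<le> \<bar>y x - y x0\<bar> \<and> f x0 (y x) - f x0 (y x0) = (y x - y x0) * fy x0 z"
      using mvt_sym[of "y x0" "y x" "\<lambda>z. f x0 z" "\<lambda>z. fy x0 z"] by blast
  qed
  then obtain eta where eta: "\<And>x. \<bar>eta x - y x0\<bar> \<le> \<bar>y x - y x0\<bar>"
    "\<And>x. f x0 (y x) - f x0 (y x0) = (y x - y x0) * fy x0 (eta x)" by metis
  define e1 where "e1 x = fx (xi x) (y x) - fx x0 (y x0)" for x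
  define e2 where "e2 x = fy x0 (eta x) - fy x0 (y x0)" for x
  have sq: "((\<lambda>x. w x) \<longlongrightarrow> c) (at x0)"
    if "\<And>x. \<bar>w x - c\<bar> \<le> \<bar>v x - c\<bar>" "(v \<longlongrightarrow> c) (at x0)" for w v :: "real \<Rightarrow> real" and c
  proof (rule tendsto_sandwich[where f="\<lambda>x. c - \<bar>v x - c\<bar>" and h="\<lambda>x. c + \<bar>v x - c\<bar>"])
    show "\<forall>\<^sub>F x in at x0. c - \<bar>v x - c\<bar> \<le> w x" proof (intro always_eventually allI)
      fix x show "c - \<bar>v x - c\<bar> \<le> w x" using that(1)[of x] by (simp add: abs_le_iff)
    qed
    show "\<forall>\<^sub>F x in at x0. w x \<le> c + \<bar>v x - c\<bar>" proof (intro always_eventually allI)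
      fix x show "w x \<le> c + \<bar>v x - c\<bar>" using that(1)[of x] by (simp add: abs_le_iff)
    qed
    have "((\<lambda>x. \<bar>v x - c\<bar>) \<longlongrightarrow> \<bar>c - c\<bar>) (at x0)" by (intro tendsto_intros that(2))
    then have "((\<lambda>x. \<bar>v x - c\<bar>) \<longlongrightarrow> 0) (at x0)" by simp
    then show "((\<lambda>x. c - \<bar>v x - c\<bar>) \<longlongrightarrow> c) (at x0)" "((\<lambda>x. c + \<bar>v x - c\<bar>) \<longlongrightarrow> c) (at x0)"
      using tendsto_add[of "\<lambda>x. c" c _ "\<lambda>x. \<bar>v x - c\<bar>" 0] tendsto_diff[of "\<lambda>x. c" c _ "\<lambda>x. \<bar>v x - c\<bar>" 0] by auto
  qed
  have ylim: "(y \<longlongrightarrow> y x0) (at x0)" using yc by (simp add: isCont_def)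
  have xilim: "(xi \<longlongrightarrow> x0) (at x0)"
    by (rule sq[of xi x0 "\<lambda>x. x"]) (use xi(1) in auto)
  have etalim: "(eta \<longlongrightarrow> y x0) (at x0)"
    by (rule sq[of eta "y x0" y]) (use eta(1) ylim in auto)
  have "((\<lambda>x. fx (fst (xi x, y x)) (snd (xi x, y x))) \<longlongrightarrow> fx (fst (x0, y x0)) (snd (x0, y x0))) (at x0)"
    by (rule isCont_tendsto_compose[OF cx]) (intro tendsto_Pair xilim ylim)
  then have "(e1 \<longlongrightarrow> 0) (at x0)" unfolding e1_def
    using tendsto_diff[of _ "fx x0 (y x0)" _ "\<lambda>x. fx x0 (y x0)" "fx x0 (y x0)"] by simp
  moreover have "((\<lambda>x. fy (fst (x0, eta x)) (snd (x0, eta x))) \<longlongrightarrow> fy (fst (x0, y x0)) (snd (x0, y x0))) (at x0)"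
    by (rule isCont_tendsto_compose[OF cy]) (intro tendsto_Pair etalim tendsto_const)
  then have "(e2 \<longlongrightarrow> 0) (at x0)" unfolding e2_def
    using tendsto_diff[of _ "fy x0 (y x0)" _ "\<lambda>x. fy x0 (y x0)" "fy x0 (y x0)"] by simp
  moreover have "\<forall>x. f x (y x) - f x0 (y x0) = (fx x0 (y x0) + e1 x) * (x - x0) + (fy x0 (y x0) + e2 x) * (y x - y x0)"
  proof
    fix x
    have "f x (y x) - f x0 (y x0) = (f x (y x) - f x0 (y x)) + (f x0 (y x) - f x0 (y x0))" by simp
    also have "\<dots> = (x - x0) * fx (xi x) (y x) + (y x - y x0) * fy x0 (eta x)" using xi(2) eta(2) by simp
    finally show "f x (y x) - f x0 (y x0) = (fx x0 (y x0) + e1 x) * (x - x0) + (fy x0 (y x0) + e2 x) * (y x - y x0)"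
      unfolding e1_def e2_def by (simp add: algebra_simps)
  qed
  ultimately show ?thesis by blast
qed


lemma implicit_deriv:
  fixes f fx fy :: "real \<Rightarrow> real \<Rightarrow> real" and y :: "real \<Rightarrow> real"
  assumes yI: "\<And>x. lo < y x \<and> y x < hi"
    and dx: "\<And>x z. lo < z \<Longrightarrow> z < hi \<Longrightarrow> ((\<lambda>x. f x z) has_real_derivative fx x z) (at x)"
    and dy: "\<And>x z. lo < z \<Longrightarrow> z < hi \<Longrightarrow> ((\<lambda>z. f x z) has_real_derivative fy x z) (at z)"
    and yc: "isCont y x0"
    and cx: "isCont (\<lambda>p. fx (fst p) (snd p)) (x0, y x0)"
    and cy: "isCont (\<lambda>p. fy (fst p) (snd p)) (x0, y x0)"
    and zero: "\<And>x. f x (y x) = 0"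
    and nz: "fy x0 (y x0) \<noteq> 0"
  shows "(y has_real_derivative (- fx x0 (y x0) / fy x0 (y x0))) (at x0)"
proof -
  obtain e1 e2 where e1: "(e1 \<longlongrightarrow> 0) (at x0)" and e2: "(e2 \<longlongrightarrow> 0) (at x0)"
    and eq: "\<And>x. f x (y x) - f x0 (y x0) = (fx x0 (y x0) + e1 x) * (x - x0) + (fy x0 (y x0) + e2 x) * (y x - y x0)"
    using two_var_decomp[OF yI dx dy yc cx cy] by blast
  have l2: "((\<lambda>x. fy x0 (y x0) + e2 x) \<longlongrightarrow> fy x0 (y x0) + 0) (at x0)" by (intro tendsto_intros e2)
  then have ev: "\<forall>\<^sub>F x in at x0. fy x0 (y x0) + e2 x \<noteq> 0" using nz tendsto_imp_eventually_ne by fastforce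
  have neq: "\<forall>\<^sub>F x in at x0. x \<noteq> x0" by (simp add: eventually_at_filter)
  have "\<forall>\<^sub>F x in at x0. - (fx x0 (y x0) + e1 x) / (fy x0 (y x0) + e2 x) = (y x - y x0) / (x - x0)"
    using ev neq
  proof (eventually_elim)
    case (elim x)
    then have "x \<noteq> x0" by simp
    from eq[of x] zero[of x] zero[of x0]
    have "(fy x0 (y x0) + e2 x) * (y x - y x0) = - (fx x0 (y x0) + e1 x) * (x - x0)" by (simp add: algebra_simps)
    with elim(1) \<open>x \<noteq> x0\<close> show ?case by (simp add: field_simps)
  qed
  moreover have "((\<lambda>x. - (fx x0 (y x0) + e1 x) / (fy x0 (y x0) + e2 x)) \<longlongrightarrow> - (fx x0 (y x0) + 0) / (fy x0 (y x0) + 0)) (at x0)"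
    by (intro tendsto_intros e1 e2) (use nz in simp)
  ultimately have "((\<lambda>x. (y x - y x0) / (x - x0)) \<longlongrightarrow> - fx x0 (y x0) / fy x0 (y x0)) (at x0)"
    using tendsto_cong by fastforce
  then show ?thesis by (simp add: has_field_derivative_iff)
qed

lemma chain_deriv:
  fixes f fx fy :: "real \<Rightarrow> real \<Rightarrow> real" and y :: "real \<Rightarrow> real"
  assumes yI: "\<And>x. lo < y x \<and> y x < hi"
    and dx: "\<And>x z. lo < z \<Longrightarrow> z < hi \<Longrightarrow> ((\<lambda>x. f x z) has_real_derivative fx x z) (at x)"
    and dy: "\<And>x z. lo < z \<Longrightarrow> z < hi \<Longrightarrow> ((\<lambda>z. f x z) has_real_derivative fy x z) (at z)"
    and yd: "(y has_real_derivative y') (at x0)"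
    and cx: "isCont (\<lambda>p. fx (fst p) (snd p)) (x0, y x0)"
    and cy: "isCont (\<lambda>p. fy (fst p) (snd p)) (x0, y x0)"
  shows "((\<lambda>x. f x (y x)) has_real_derivative (fx x0 (y x0) + fy x0 (y x0) * y')) (at x0)"
proof -
  have yc: "isCont y x0" using yd by (rule DERIV_isCont)
  obtain e1 e2 where e1: "(e1 \<longlongrightarrow> 0) (at x0)" and e2: "(e2 \<longlongrightarrow> 0) (at x0)"
    and eq: "\<And>x. f x (y x) - f x0 (y x0) = (fx x0 (y x0) + e1 x) * (x - x0) + (fy x0 (y x0) + e2 x) * (y x - y x0)"
    using two_var_decomp[OF yI dx dy yc cx cy] by blast
  have yq: "((\<lambda>x. (y x - y x0) / (x - x0)) \<longlongrightarrow> y') (at x0)" using yd by (simp add: has_field_derivative_iff)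
  have neq: "\<forall>\<^sub>F x in at x0. x \<noteq> x0" by (simp add: eventually_at_filter)
  have "\<forall>\<^sub>F x in at x0. (fx x0 (y x0) + e1 x) + (fy x0 (y x0) + e2 x) * ((y x - y x0) / (x - x0)) = (f x (y x) - f x0 (y x0)) / (x - x0)"
    using neq
  proof (eventually_elim)
    case (elim x)
    then show ?case unfolding eq by (simp add: field_simps)
  qed
  moreover have "((\<lambda>x. (fx x0 (y x0) + e1 x) + (fy x0 (y x0) + e2 x) * ((y x - y x0) / (x - x0))) \<longlongrightarrow> (fx x0 (y x0) + 0) + (fy x0 (y x0) + 0) * y') (at x0)"
    by (intro tendsto_intros e1 e2 yq)
  ultimately have "((\<lambda>x. (f x (y x) - f x0 (y x0)) / (x - x0)) \<longlongrightarrow> fx x0 (y x0) + fy x0 (y x0) * y') (at x0)"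
    using tendsto_cong by fastforce
  then show ?thesis by (simp add: has_field_derivative_iff)
qed

lemma unique_iff_range:
  fixes f :: "real \<Rightarrow> real"
  assumes cont: "\<And>x. isCont f x"
    and mono: "\<And>x y. x < y \<Longrightarrow> f x < f y"
    and top: "(f \<longlongrightarrow> c) at_top" and bot: "(f \<longlongrightarrow> - c) at_bot"
  shows "(\<exists>!x. f x = v) \<longleftrightarrow> \<bar>v\<bar> < c"
proof
  assume "\<exists>!x. f x = v"
  then obtain x where fx: "f x = v" by blast
  have "f (x + 1) \<le> c"
  proof (rule tendsto_lowerbound[OF top])
    show "\<forall>\<^sub>F y in at_top. f (x + 1) \<le> f y"
      using eventually_ge_at_top[of "x+1"] by eventually_elim (metis mono order.order_iff_strict)
  qed simp
  moreover have "- c \<le> f (x - 1)"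
  proof (rule tendsto_upperbound[OF bot])
    show "\<forall>\<^sub>F y in at_bot. f y \<le> f (x - 1)"
      using eventually_le_at_bot[of "x-1"] by eventually_elim (metis mono order.order_iff_strict)
  qed simp
  moreover have "f (x - 1) < f x" "f x < f (x + 1)" using mono by auto
  ultimately show "\<bar>v\<bar> < c" using fx by auto
next
  assume v: "\<bar>v\<bar> < c"
  have "\<forall>\<^sub>F y in at_top. v < f y" using top v by (intro order_tendstoD) auto
  then obtain b where b: "v < f b" by (meson eventually_happens' trivial_limit_at_top_linorder) 
  have "\<forall>\<^sub>F y in at_bot. f y < v" using bot v by (intro order_tendstoD) auto
  then obtain a where a: "f a < v" by (meson eventually_happens' trivial_limit_at_bot_linorder)
  have "a < b" using a b mono by (metis less_trans not_less_iff_gr_or_eq)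
  then obtain x where "f x = v" using IVT'[of f a v b] a b cont
    by (auto intro!: continuous_at_imp_continuous_on)
  moreover have "f y = v \<Longrightarrow> y = x" for y using mono \<open>f x = v\<close> by (metis less_irrefl not_less_iff_gr_or_eq)
  ultimately show "\<exists>!x. f x = v" by blast
qed


lemma tendsto_abs_bound:
  fixes w v :: "'a \<Rightarrow> real"
  assumes "\<forall>\<^sub>F x in F. \<bar>w x - c\<bar> \<le> v x" "(v \<longlongrightarrow> 0) F"
  shows "(w \<longlongrightarrow> c) F"
proof (rule tendsto_sandwich[where f="\<lambda>x. c - v x" and h="\<lambda>x. c + v x"])
  show "\<forall>\<^sub>F x in F. c - v x \<le> w x" using assms(1) by eventually_elim (simp add: abs_le_iff)
  show "\<forall>\<^sub>F x in F. w x \<le> c + v x" using assms(1) by eventually_elim (simp add: abs_le_iff)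
  show "((\<lambda>x. c - v x) \<longlongrightarrow> c) F" using tendsto_diff[OF tendsto_const assms(2), of c] by simp
  show "((\<lambda>x. c + v x) \<longlongrightarrow> c) F" using tendsto_add[OF tendsto_const assms(2), of c] by simp
qed



lemma key_pos:
  fixes A B k sa sb Q d t :: real
  assumes A: "0 < A" and B: "0 < B" and k: "0 < k"
    and sa: "\<bar>d*Q\<bar> < sa" and sb: "\<bar>d*Q\<bar> < sb"
    and ab: "sb < sa"
    and t: "t = (sa - sb) - d*Q*(ln (sa + d*Q) - ln (sb + d*Q))"
    and tpos: "0 < t" and kt: "k * t < B"
  shows "0 < (1/(sb + d*Q) - 1/(sa + d*Q))
     + ((sa - d*Q)*((sa + d*Q) - (sb + d*Q))/(sb + d*Q) + d*Q*(ln (sa + d*Q) - ln (sb + d*Q)))/(A*(sa + d*Q))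
     + k*(((sb - d*Q)*((sa + d*Q) - (sb + d*Q))/(sa + d*Q) + d*Q*(ln (sa + d*Q) - ln (sb + d*Q)))/(B*(sb + d*Q)))"
proof -
  define a where "a = sa + d*Q"
  define b where "b = sb + d*Q"
  define q where "q = d*Q"
  define D where "D = a - b"
  define L where "L = ln a - ln b"
  have a: "0 < a" and b: "0 < b" using sa sb by (auto simp: a_def b_def abs_less_iff)
  have sa': "0 < sa - q" "0 < sa" and sb': "0 < sb - q" "0 < sb" using sa sb by (auto simp: q_def abs_less_iff)
  have D: "0 < D" using ab by (simp add: D_def a_def b_def)
  have ab': "b < a" using D by (simp add: D_def)
  have L: "0 < L" using ab' a b by (simp add: L_def)
  have Lle: "L \<le> D / b" using ln_diff_le[OF a b] by (simp add: L_def D_def)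
  have t': "t = D - q * L" using t by (simp add: D_def a_def b_def q_def L_def)
  define Ga where "Ga = (sa - q) * D / b + q * L"
  define Gb where "Gb = (sb - q) * D / a + q * L"
  have Ga: "0 < Ga"
  proof (cases "0 \<le> q")
    case True
    have "0 < (sa - q) * D / b" using sa' D b by simp
    moreover have "0 \<le> q * L" using True L by simp
    ultimately show ?thesis by (simp add: Ga_def)
  next
    case False
    have "q * (D / b) \<le> q * L" using Lle False by (intro mult_left_mono_neg) auto
    moreover have "0 < sa * D / b" using sa' D b by simp
    moreover have "(sa - q) * D / b + q * (D / b) = sa * D / b" by (simp add: algebra_simps add_divide_distrib diff_divide_distrib)
    ultimately show ?thesis unfolding Ga_def by linarith
  qed
  have E: "0 < 1/b - 1/a" using a b ab' by (simp add: field_simps)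
  have EG: "0 < (1/b - 1/a) + k * (Gb / (B * b))"
  proof (cases "0 \<le> Gb")
    case True
    then have "0 \<le> k * (Gb / (B * b))" using k B b by simp
    then show ?thesis using E by linarith
  next
    case False
    have num: "t * D / a + Gb = (sa - q) * D / a + q * L * b / a"
    proof -
      have "t * D / a + Gb = ((D - q * L) * D + (sb - q) * D + q * L * a) / a"
        using a by (simp add: t' Gb_def field_simps)
      also have "(D - q * L) * D + (sb - q) * D + q * L * a = (sa - q) * D + q * L * b"
        by (simp add: D_def a_def b_def q_def algebra_simps)
      finally show ?thesis using a by (simp add: field_simps)
    qed
    have numpos: "0 < t * D / a + Gb"
    proof (cases "0 \<le> q")
      case True
      have "0 < (sa - q) * D / a" using sa' D a by simp
      moreover have "0 \<le> q * L * b / a" using True L a b by simp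
      ultimately show ?thesis using num by linarith
    next
      case False
      have "q * (D / b) \<le> q * L" using Lle False by (intro mult_left_mono_neg) auto
      then have "q * (D / b) * (b / a) \<le> q * L * (b / a)" using a b by (intro mult_right_mono) auto
      then have "q * D / a \<le> q * L * b / a" using b by (simp add: field_simps)
      moreover have "0 < sa * D / a" using sa' D a by simp
      moreover have "(sa - q) * D / a + q * D / a = sa * D / a" by (simp add: algebra_simps add_divide_distrib diff_divide_distrib)
      ultimately show ?thesis using num by linarith
    qed
    have "B * Gb < (k * t) * Gb" using kt False by (intro mult_strict_right_mono_neg) auto
    then have "B * Gb / (t * B * b) < (k * t) * Gb / (t * B * b)" using tpos B b by (intro divide_strict_right_mono) auto
    then have 1: "Gb / (t * b) < k * (Gb / (B * b))" using tpos B b by (simp add: field_simps)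
    have "(1/b - 1/a) + Gb / (t * b) = (t * D / a + Gb) / (t * b)"
      using a b tpos by (simp add: D_def field_simps)
    also have "\<dots> > 0" using numpos tpos b by simp
    finally show ?thesis using 1 by linarith
  qed
  have "0 < Ga / (A * a)" using Ga A a by simp
  with EG have "0 < (1/b - 1/a) + Ga / (A * a) + k * (Gb / (B * b))" by linarith
  then show ?thesis by (simp add: Ga_def Gb_def a_def b_def q_def D_def L_def)
qed


lemma key_neg:
  fixes A B k sa sb Q d t :: real
  assumes A: "0 < A" and B: "0 < B" and k: "0 < k"
    and sa: "\<bar>d*Q\<bar> < sa" and sb: "\<bar>d*Q\<bar> < sb"
    and ab: "sa < sb"
    and t: "t = (sa - sb) - d*Q*(ln (sa + d*Q) - ln (sb + d*Q))"
    and tneg: "t < 0" and At: "0 < A + t"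
  shows "(1/(sb + d*Q) - 1/(sa + d*Q))
     + ((sa - d*Q)*((sa + d*Q) - (sb + d*Q))/(sb + d*Q) + d*Q*(ln (sa + d*Q) - ln (sb + d*Q)))/(A*(sa + d*Q))
     + k*(((sb - d*Q)*((sa + d*Q) - (sb + d*Q))/(sa + d*Q) + d*Q*(ln (sa + d*Q) - ln (sb + d*Q)))/(B*(sb + d*Q))) < 0"
proof -
  define a where "a = sa + d*Q"
  define b where "b = sb + d*Q"
  define q where "q = d*Q"
  define D where "D = a - b"
  define L where "L = ln a - ln b"
  have a: "0 < a" and b: "0 < b" using sa sb by (auto simp: a_def b_def abs_less_iff)
  have sa': "0 < sa - q" "0 < sa" and sb': "0 < sb - q" "0 < sb" using sa sb by (auto simp: q_def abs_less_iff)
  have D: "D < 0" using ab by (simp add: D_def a_def b_def)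
  have ab': "a < b" using D by (simp add: D_def)
  have L: "L < 0" using ab' a b by (simp add: L_def)
  have Lge: "D / a \<le> L"
  proof -
    have "(a - b) / a = - ((b - a) / a)" by (simp add: minus_divide_left)
    then show ?thesis using ln_diff_le[OF b a] by (simp add: L_def D_def)
  qed
  have t': "t = D - q * L" using t by (simp add: D_def a_def b_def q_def L_def)
  define Ga where "Ga = (sa - q) * D / b + q * L"
  define Gb where "Gb = (sb - q) * D / a + q * L"
  have Gb: "Gb < 0"
  proof (cases "0 \<le> q")
    case True
    have "(sb - q) * D / a < 0" using sb' D a by (simp add: mult_pos_neg divide_neg_pos)
    moreover have "q * L \<le> 0" using True L by (simp add: mult_nonneg_nonpos)
    ultimately show ?thesis by (simp add: Gb_def)
  next
    case False
    have "q * L \<le> q * (D / a)" using Lge False by (intro mult_left_mono_neg) auto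
    moreover have "sb * D / a < 0" using sb' D a by (simp add: mult_pos_neg divide_neg_pos)
    moreover have "(sb - q) * D / a + q * (D / a) = sb * D / a" by (simp add: algebra_simps add_divide_distrib diff_divide_distrib)
    ultimately show ?thesis unfolding Gb_def by linarith
  qed
  have E: "1/b - 1/a < 0" using a b ab' by (simp add: field_simps)
  have nt: "0 < - t" using tneg by simp
  have EG: "(1/b - 1/a) + Ga / (A * a) < 0"
  proof (cases "Ga \<le> 0")
    case True
    then have "Ga / (A * a) \<le> 0" using A a by (simp add: divide_nonpos_pos)
    then show ?thesis using E by linarith
  next
    case False
    have num: "(- t) * D / b + Ga = (sb - q) * D / b + q * L * a / b"
    proof -
      have "(- t) * D / b + Ga = (- (D - q * L) * D + (sa - q) * D + q * L * b) / b"
        using b by (simp add: t' Ga_def field_simps)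
      also have "- (D - q * L) * D + (sa - q) * D + q * L * b = (sb - q) * D + q * L * a"
        by (simp add: D_def a_def b_def q_def algebra_simps)
      finally show ?thesis using b by (simp add: field_simps)
    qed
    have numneg: "(- t) * D / b + Ga < 0"
    proof (cases "0 \<le> q")
      case True
      have "(sb - q) * D / b < 0" using sb' D b by (simp add: mult_pos_neg divide_neg_pos)
      moreover have "q * L * a / b \<le> 0" using True L a b
        by (simp add: mult_nonneg_nonpos divide_nonpos_pos mult_nonpos_nonneg)
      ultimately show ?thesis using num by linarith
    next
      case False
      have "q * L \<le> q * (D / a)" using Lge False by (intro mult_left_mono_neg) auto
      then have "q * L * (a / b) \<le> q * (D / a) * (a / b)" using a b by (intro mult_right_mono) auto
      then have "q * L * a / b \<le> q * D / b" using a by (simp add: field_simps)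
      moreover have "sb * D / b < 0" using sb' D b by (simp add: mult_pos_neg divide_neg_pos)
      moreover have "(sb - q) * D / b + q * D / b = sb * D / b" by (simp add: algebra_simps add_divide_distrib diff_divide_distrib)
      ultimately show ?thesis using num by linarith
    qed
    have "Ga * (- t) < Ga * A" using At False by (intro mult_strict_left_mono) auto
    moreover have "0 < A * (- t) * a" using nt A a by (intro mult_pos_pos) auto
    ultimately have "Ga * (- t) / (A * (- t) * a) < Ga * A / (A * (- t) * a)" by (intro divide_strict_right_mono)
    then have 1: "Ga / (A * a) < Ga / ((- t) * a)" using nt A a by (simp add: field_simps)
    have "(1/b - 1/a) + Ga / ((- t) * a) = ((- t) * D / b + Ga) / ((- t) * a)"
      using a b nt by (simp add: D_def field_simps)
    also have "\<dots> < 0" using numneg nt a by (intro divide_neg_pos mult_pos_pos) auto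
    finally show ?thesis using 1 by linarith
  qed
  have "k * (Gb / (B * b)) < 0" using Gb k B b by (simp add: mult_pos_neg divide_neg_pos)
  with EG have "(1/b - 1/a) + Ga / (A * a) + k * (Gb / (B * b)) < 0" by linarith
  then show ?thesis by (simp add: Ga_def Gb_def a_def b_def q_def D_def L_def)
qed


lemma grp_ident:
  fixes A sa a b Q d cc L :: real
  assumes "A \<noteq> 0" "a \<noteq> 0" "b \<noteq> 0" "a = sa + d*Q" "sa^2 = Q^2 + A^2" "cc = 1 - d^2"
  shows "(1/b - 1/a) * (A / a) + Q * (1 / (A * a)) * (cc * Q * (1/b - 1/a) + d * L)
       = ((sa - d*Q) * (a - b) / b + d*Q*L) / (A * a)"
proof -
  have 1: "A^2 + cc * Q^2 = (sa - d*Q) * a"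
  proof -
    have "(sa - d*Q) * a = sa^2 - d^2 * Q^2" using assms(4) by (simp add: algebra_simps power2_eq_square)
    then show ?thesis using assms(5) unfolding assms(6) by (simp add: algebra_simps)
  qed
  have "(1/b - 1/a) * (A / a) + Q * (1 / (A * a)) * (cc * Q * (1/b - 1/a) + d * L)
      = ((A^2 + cc * Q^2) * (1/b - 1/a) + d * Q * L) / (A * a)"
    using assms(1-3) by (simp add: field_simps power2_eq_square)
  also have "\<dots> = ((sa - d*Q) * (a * (1/b - 1/a)) + d * Q * L) / (A * a)" unfolding 1 by (simp add: algebra_simps)
  also have "a * (1/b - 1/a) = (a - b) / b" using assms(2,3) by (simp add: field_simps)
  finally show ?thesis by (simp add: algebra_simps)
qed

lemma key_ident:
  fixes A B k sa sb Q d cc :: real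
  assumes A: "A \<noteq> 0" and B: "B \<noteq> 0" and a: "sa + d*Q \<noteq> 0" and b: "sb + d*Q \<noteq> 0"
    and sa: "sa^2 = Q^2 + A^2" and sb: "sb^2 = Q^2 + B^2" and cc: "cc = 1 - d^2"
    and M: "1 + A/(sa + d*Q) + k*(B/(sb + d*Q)) \<noteq> 0"
  shows "(- cc/(sa + d*Q) + cc/(sb + d*Q)) + (cc*Q/(A*(sa + d*Q)) + k*(cc*Q/(B*(sb + d*Q))))
      * (- (- (cc*Q/(sa + d*Q) - d*ln (sa + d*Q)) + (cc*Q/(sb + d*Q) - d*ln (sb + d*Q))) / (- 1 - A/(sa + d*Q) - k*(B/(sb + d*Q))))
    = cc * ((1/(sb + d*Q) - 1/(sa + d*Q))
     + ((sa - d*Q)*((sa + d*Q) - (sb + d*Q))/(sb + d*Q) + d*Q*(ln (sa + d*Q) - ln (sb + d*Q)))/(A*(sa + d*Q))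
     + k*(((sb - d*Q)*((sa + d*Q) - (sb + d*Q))/(sa + d*Q) + d*Q*(ln (sa + d*Q) - ln (sb + d*Q)))/(B*(sb + d*Q))))
     / (1 + A/(sa + d*Q) + k*(B/(sb + d*Q)))"
proof -
  define a where "a = sa + d*Q"
  define b where "b = sb + d*Q"
  define L where "L = ln a - ln b"
  define E where "E = 1/b - 1/a"
  define M where "M = 1 + A/a + k*(B/b)"
  have a0: "a \<noteq> 0" and b0: "b \<noteq> 0" and M0: "M \<noteq> 0" using a b M by (auto simp: a_def b_def M_def)
  have g1: "E * (A / a) + Q * (1 / (A * a)) * (cc * Q * E + d * L) = ((sa - d*Q) * (a - b) / b + d*Q*L) / (A * a)"
    unfolding E_def by (rule grp_ident[OF A a0 b0 a_def sa cc])
  have g2': "(1/a - 1/b) * (B / b) + Q * (1 / (B * b)) * (cc * Q * (1/a - 1/b) + d * (- L))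
       = ((sb - d*Q) * (b - a) / a + d*Q*(- L)) / (B * b)"
    by (rule grp_ident[OF B b0 a0 b_def sb cc])
  have g2: "E * (B / b) + Q * (1 / (B * b)) * (cc * Q * E + d * L) = ((sb - d*Q) * (a - b) / a + d*Q*L) / (B * b)"
  proof -
    have "E * (B / b) + Q * (1 / (B * b)) * (cc * Q * E + d * L) = - ((1/a - 1/b) * (B / b) + Q * (1 / (B * b)) * (cc * Q * (1/a - 1/b) + d * (- L)))"
      by (simp add: E_def algebra_simps)
    also have "\<dots> = ((sb - d*Q) * (a - b) / a + d*Q*L) / (B * b)"
    proof -
      have h: "(sb - d*Q) * (b - a) / a + d*Q*(- L) = - ((sb - d*Q) * (a - b) / a + d*Q*L)"
        using a0 by (simp add: field_simps)
      show ?thesis unfolding g2' h minus_divide_left[symmetric] by simp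
    qed
    finally show ?thesis .
  qed
  have "(- cc/a + cc/b) + (cc*Q/(A*a) + k*(cc*Q/(B*b))) * (- (- (cc*Q/a - d*ln a) + (cc*Q/b - d*ln b)) / (- 1 - A/a - k*(B/b)))
      = cc * (E * M + Q * (1/(A*a) + k/(B*b)) * (cc * Q * E + d * L)) / M"
  proof -
    define K where "K = 1/(A*a) + k/(B*b)"
    define G where "G = cc * Q * E + d * L"
    have 1: "- 1 - A/a - k*(B/b) = - M" by (simp add: M_def)
    have 2: "- (- (cc*Q/a - d*ln a) + (cc*Q/b - d*ln b)) = - G"
      by (simp add: G_def E_def L_def algebra_simps diff_divide_distrib)
    have 3: "cc*Q/(A*a) + k*(cc*Q/(B*b)) = cc * Q * K" by (simp add: K_def algebra_simps)
    have 4: "- cc/a + cc/b = cc * E" by (simp add: E_def algebra_simps diff_divide_distrib)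
    have "cc * E + cc * Q * K * (- G / - M) = cc * (E * M + Q * K * G) / M"
      using M0 by (simp add: field_simps)
    then show ?thesis unfolding 1 2 3 4 K_def G_def .
  qed
  also have "E * M + Q * (1/(A*a) + k/(B*b)) * (cc * Q * E + d * L)
     = E + (E * (A / a) + Q * (1 / (A * a)) * (cc * Q * E + d * L)) + k * (E * (B / b) + Q * (1 / (B * b)) * (cc * Q * E + d * L))"
    by (simp add: M_def algebra_simps)
  also have "\<dots> = E + ((sa - d*Q) * (a - b) / b + d*Q*L) / (A * a) + k * (((sb - d*Q) * (a - b) / a + d*Q*L) / (B * b))"
    unfolding g1 g2 ..
  finally show ?thesis unfolding a_def b_def L_def E_def M_def .
qed


lemma ln_abs_bound:
  fixes a b m :: real
  assumes "0 < m" "m \<le> a" "m \<le> b"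
  shows "\<bar>ln a - ln b\<bar> \<le> \<bar>a - b\<bar> / m"
proof -
  have a: "0 < a" and b: "0 < b" using assms by auto
  show ?thesis
  proof (cases "b \<le> a")
    case True
    have "ln a - ln b \<le> (a - b) / b" using ln_diff_le[OF a b] .
    also have "\<dots> \<le> (a - b) / m" using True assms by (intro divide_left_mono) auto
    finally show ?thesis using True a b by simp
  next
    case False
    have "ln b - ln a \<le> (b - a) / a" using ln_diff_le[OF b a] .
    also have "\<dots> \<le> (b - a) / m" using False assms by (intro divide_left_mono) auto
    finally show ?thesis using False a b by simp
  qed
qed

lemma t_bound:
  fixes d Q sa sb t C0 :: real
  assumes d: "\<bar>d\<bar> < 1" and Q: "Q \<noteq> 0" and sa: "\<bar>Q\<bar> \<le> sa" and sb: "\<bar>Q\<bar> \<le> sb"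
    and t: "t = (sa - sb) - d*Q*(ln (sa + d*Q) - ln (sb + d*Q))"
    and D: "\<bar>sa - sb\<bar> \<le> C0 / \<bar>Q\<bar>"
  shows "\<bar>t\<bar> \<le> C0 / ((1 - \<bar>d\<bar>) * \<bar>Q\<bar>)"
proof -
  define m where "m = (1 - \<bar>d\<bar>) * \<bar>Q\<bar>"
  have m: "0 < m" using d Q by (simp add: m_def)
  have dq: "\<bar>d * Q\<bar> = \<bar>d\<bar> * \<bar>Q\<bar>" by (simp add: abs_mult)
  have "- (\<bar>d\<bar> * \<bar>Q\<bar>) \<le> d * Q" using abs_ge_minus_self[of "d * Q"] dq by linarith
  then have ma: "m \<le> sa + d * Q" "m \<le> sb + d * Q" using sa sb by (auto simp: m_def algebra_simps)
  have L: "\<bar>ln (sa + d*Q) - ln (sb + d*Q)\<bar> \<le> \<bar>sa - sb\<bar> / m"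
    using ln_abs_bound[OF m ma] by simp
  have "\<bar>d*Q*(ln (sa + d*Q) - ln (sb + d*Q))\<bar> = \<bar>d\<bar> * \<bar>Q\<bar> * \<bar>ln (sa + d*Q) - ln (sb + d*Q)\<bar>"
    by (simp add: abs_mult)
  also have "\<dots> \<le> \<bar>d\<bar> * \<bar>Q\<bar> * (\<bar>sa - sb\<bar> / m)" using L by (intro mult_left_mono) auto
  also have "\<dots> = \<bar>d\<bar> * \<bar>sa - sb\<bar> / (1 - \<bar>d\<bar>)" using Q d by (simp add: m_def field_simps)
  finally have 1: "\<bar>d*Q*(ln (sa + d*Q) - ln (sb + d*Q))\<bar> \<le> \<bar>d\<bar> * \<bar>sa - sb\<bar> / (1 - \<bar>d\<bar>)" .
  have "\<bar>t\<bar> \<le> \<bar>sa - sb\<bar> + \<bar>d\<bar> * \<bar>sa - sb\<bar> / (1 - \<bar>d\<bar>)" using 1 t by linarith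
  also have "\<dots> = \<bar>sa - sb\<bar> / (1 - \<bar>d\<bar>)" using d by (simp add: field_simps)
  also have "\<dots> \<le> (C0 / \<bar>Q\<bar>) / (1 - \<bar>d\<bar>)" using D d by (intro divide_right_mono) auto
  also have "\<dots> = C0 / ((1 - \<bar>d\<bar>) * \<bar>Q\<bar>)" by (simp add: field_simps)
  finally show ?thesis .
qed

lemma sqrt_diff_bound:
  fixes Q A B :: real
  assumes Q: "Q \<noteq> 0"
  shows "\<bar>sqrt (Q^2 + A^2) - sqrt (Q^2 + B^2)\<bar> \<le> (A^2 + B^2) / \<bar>Q\<bar>"
proof -
  define x where "x = sqrt (Q^2 + A^2)"
  define y where "y = sqrt (Q^2 + B^2)"
  have x: "\<bar>Q\<bar> \<le> x" "x^2 = Q^2 + A^2" unfolding x_def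
    by (simp_all add: add_nonneg_nonneg real_le_rsqrt del: real_sqrt_abs)
  have y: "\<bar>Q\<bar> \<le> y" "y^2 = Q^2 + B^2" unfolding y_def
    by (simp_all add: add_nonneg_nonneg real_le_rsqrt del: real_sqrt_abs)
  have Qp: "0 < \<bar>Q\<bar>" using Q by simp
  have s: "\<bar>Q\<bar> \<le> x + y" using x y by (smt (verit) abs_ge_zero)
  have "(x - y) * (x + y) = A^2 - B^2" using x y by (simp add: algebra_simps power2_eq_square)
  then have "\<bar>x - y\<bar> * \<bar>x + y\<bar> = \<bar>A^2 - B^2\<bar>" by (metis abs_mult)
  then have "\<bar>x - y\<bar> * (x + y) = \<bar>A^2 - B^2\<bar>" using s Qp by simp
  also have "\<dots> \<le> A^2 + B^2" by (simp add: abs_le_iff)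
  finally have 1: "\<bar>x - y\<bar> * (x + y) \<le> A^2 + B^2" .
  have "\<bar>x - y\<bar> * \<bar>Q\<bar> \<le> \<bar>x - y\<bar> * (x + y)" using s by (intro mult_left_mono) auto
  with 1 have "\<bar>x - y\<bar> * \<bar>Q\<bar> \<le> A^2 + B^2" by linarith
  then show ?thesis using Qp unfolding x_def[symmetric] y_def[symmetric] by (simp add: field_simps)
qed



lemma alg1: fixes S a d Q :: real
  assumes "S \<noteq> 0" "a \<noteq> 0" "a = S + d * Q"
  shows "Q / S - d * Q * ((Q / S + d) / a) = (1 - d^2) * Q / a"
proof -
  have "Q / S - d * Q * ((Q / S + d) / a) = (Q * a - d * Q * (Q + d * S)) / (S * a)"
    using assms(1,2) by (simp add: field_simps)
  also have "Q * a - d * Q * (Q + d * S) = (1 - d^2) * Q * S" using assms(3) by (simp add: algebra_simps power2_eq_square)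
  finally show ?thesis using assms(1,2) by simp
qed

lemma alg2: fixes S a d Q X :: real
  assumes "S \<noteq> 0" "a \<noteq> 0" "a = S + d * Q"
  shows "X / S - d * Q * (X / S / a) = X / a"
proof -
  have "X / S - d * Q * (X / S / a) = X * (a - d * Q) / (S * a)"
    using assms(1,2) by (simp add: field_simps)
  also have "a - d * Q = S" using assms(3) by simp
  finally show ?thesis using assms(1,2) by simp
qed

lemma alg3: fixes S a b d Q :: real
  assumes "S \<noteq> 0" "a \<noteq> 0" "b \<noteq> 0" "a = S + d * Q" "b = S - Q"
  shows "d * ((Q / S + d) / a) + (Q / S - 1) / b = - (1 - d^2) / a"
proof -
  have "Q / S - 1 = - b / S" using assms(1) unfolding assms(5) by (simp add: field_simps)
  then have "(Q / S - 1) / b = - 1 / S" using assms(3) by simp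
  moreover have "d * ((Q / S + d) / a) - 1 / S = (d * (Q + d * S) - a) / (S * a)"
    using assms(1,2) by (simp add: field_simps)
  moreover have "d * (Q + d * S) - a = - (1 - d^2) * S" using assms(4) by (simp add: algebra_simps power2_eq_square)
  ultimately show ?thesis using assms(1,2) by simp
qed

lemma alg4: fixes S a b d Q X :: real
  assumes "S \<noteq> 0" "a \<noteq> 0" "b \<noteq> 0" "X \<noteq> 0" "a = S + d * Q" "b = S - Q" "X^2 = S^2 - Q^2"
  shows "d * (X / S / a) + X / S / b - (1 + d) / X = (1 - d^2) * Q / (X * a)"
proof -
  have "d * (X / S / a) + X / S / b - (1 + d) / X = (d * X^2 * b + X^2 * a - (1 + d) * S * a * b) / (S * a * b * X)"
    using assms(1-4) by (simp add: field_simps power2_eq_square)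
  also have "d * X^2 * b + X^2 * a - (1 + d) * S * a * b = (1 - d^2) * Q * S * b"
    unfolding assms(7) assms(5,6) by (simp add: algebra_simps power2_eq_square)
  also have "\<dots> / (S * a * b * X) = (1 - d^2) * Q / (X * a)"
    using assms(1-4) by (simp add: field_simps)
  finally show ?thesis .
qed

locale pnp =
  fixes l r al be d :: real
  assumes lpos: "0 < l" and rpos: "0 < r" and apos: "0 < al" and b1: "be < 1" and dlt: "\<bar>d\<bar> < 1"
begin

definition "k = (1 - be) / al"
definition "AM = pnp_AM l r al be"
definition "Bf A = pnp_B l r al be A"
definition "cc = 1 - d^2"
definition "sa Q A = sqrt (Q^2 + A^2)"
definition "sb Q A = sqrt (Q^2 + (Bf A)^2)"
definition "FF Q S = S - d * Q * ln (S + d * Q)"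
definition "g2 Q A = - (A - l) - FF Q (sa Q A) + FF Q (sb Q A)"
definition "PP Q X = d * ln (sqrt (Q^2 + X^2) + d * Q) + ln (sqrt (Q^2 + X^2) - Q) - (1 + d) * ln X"
definition "g1 Q A = d * ln (l / r) + PP Q A - PP Q (Bf A)"

lemma kpos: "0 < k" using apos b1 by (simp add: k_def)
lemma AM_eq: "AM = l + r / k" using apos b1 by (simp add: AM_def k_def pnp_AM_def)
lemma Bf_eq: "Bf A = k * (l - A) + r" by (simp add: Bf_def k_def pnp_B_def)
lemma AM_pos: "0 < AM" using lpos rpos kpos by (simp add: AM_eq add_pos_pos)
lemma Bf_pos: "A < AM \<Longrightarrow> 0 < Bf A"
  using kpos rpos by (simp add: Bf_eq AM_eq field_simps)
lemma Bf_AM: "Bf AM = 0" using kpos by (simp add: Bf_eq AM_eq field_simps)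
lemma Bf_nonneg: "A \<le> AM \<Longrightarrow> 0 \<le> Bf A"
  using kpos rpos by (simp add: Bf_eq AM_eq field_simps)
lemma Bf_mono: "A1 \<le> A2 \<Longrightarrow> Bf A2 \<le> Bf A1" using kpos by (simp add: Bf_eq mult_left_mono)
lemma cc_pos: "0 < cc" using dlt by (simp add: cc_def abs_less_iff power2_eq_square) (smt (verit) mult_less_cancel_right1 mult_minus_left)

lemma sq_ge: "\<bar>Q\<bar> \<le> sqrt (Q^2 + X^2)"
  by (metis add_le_cancel_left power2_less_eq_zero_iff real_sqrt_abs real_sqrt_le_mono zero_le_power2 add_0_right)
lemma sq_gt: "X \<noteq> 0 \<Longrightarrow> \<bar>Q\<bar> < sqrt (Q^2 + X^2)"
  by (metis add_less_cancel_left real_sqrt_abs real_sqrt_less_mono zero_less_power2 add_0_right)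
lemma dQ_le: "\<bar>d * Q\<bar> \<le> \<bar>Q\<bar>" using dlt mult_right_mono[of "\<bar>d\<bar>" 1 "\<bar>Q\<bar>"] by (simp add: abs_mult)
lemma dQ_lt: "Q \<noteq> 0 \<Longrightarrow> \<bar>d * Q\<bar> < \<bar>Q\<bar>" using dlt by (simp add: abs_mult)
lemma sq_dQ: "X \<noteq> 0 \<or> Q \<noteq> 0 \<Longrightarrow> \<bar>d * Q\<bar> < sqrt (Q^2 + X^2)"
  using sq_ge[of Q X] sq_gt[of X Q] dQ_le[of Q] dQ_lt[of Q] by fastforce
lemma sq_plus: "X \<noteq> 0 \<or> Q \<noteq> 0 \<Longrightarrow> 0 < sqrt (Q^2 + X^2) + d * Q"
  using sq_dQ[of X Q] by linarith
lemma sq_minus: "X \<noteq> 0 \<Longrightarrow> 0 < sqrt (Q^2 + X^2) - Q"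
  using sq_gt[of X Q] by linarith

lemma FF_mono_strict:
  assumes "\<bar>Q\<bar> \<le> S1" "S1 < S2" shows "FF Q S1 < FF Q S2"
proof (cases "Q = 0")
  case True then show ?thesis using assms by (simp add: FF_def)
next
  case False
  have S1: "0 < S1" using assms False by linarith
  have x: "0 < S1 + d * Q" using dQ_lt[OF False] assms by linarith
  have y: "S1 + d * Q < S2 + d * Q" using assms by simp
  show ?thesis
  proof (cases "d * Q \<le> 0")
    case True
    have "ln (S1 + d * Q) \<le> ln (S2 + d * Q)" using x y by simp
    then have "d * Q * ln (S2 + d * Q) \<le> d * Q * ln (S1 + d * Q)"
      using True by (simp add: mult_left_mono_neg)
    then show ?thesis using assms by (simp add: FF_def)
  next
    case False
    have "ln (S2 + d * Q) - ln (S1 + d * Q) \<le> (S2 - S1) / (S1 + d * Q)"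
      using ln_diff_le[of "S2 + d * Q" "S1 + d * Q"] x y by simp
    then have "d * Q * (ln (S2 + d * Q) - ln (S1 + d * Q)) \<le> d * Q * ((S2 - S1) / (S1 + d * Q))"
      using False by (intro mult_left_mono) auto
    also have "\<dots> < S2 - S1"
    proof -
      have "d * Q / (S1 + d * Q) < 1" using S1 x by simp
      then have "d * Q / (S1 + d * Q) * (S2 - S1) < 1 * (S2 - S1)" using assms
        by (intro mult_strict_right_mono) auto
      then show ?thesis by simp
    qed
    finally show ?thesis by (simp add: FF_def algebra_simps)
  qed
qed

lemma FF_mono: "\<bar>Q\<bar> \<le> S1 \<Longrightarrow> S1 \<le> S2 \<Longrightarrow> FF Q S1 \<le> FF Q S2"
  using FF_mono_strict[of Q S1 S2] by (cases "S1 = S2") auto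


lemma sa_ge: "\<bar>Q\<bar> \<le> sa Q A" unfolding sa_def by (rule sq_ge)
lemma sb_ge: "\<bar>Q\<bar> \<le> sb Q A" unfolding sb_def by (rule sq_ge)

lemma g2_strict_anti:
  assumes "0 \<le> A1" "A1 < A2" "A2 \<le> AM" shows "g2 Q A2 < g2 Q A1"
proof -
  have "sa Q A1 \<le> sa Q A2" unfolding sa_def using assms by (intro real_sqrt_le_mono add_left_mono power_mono) auto
  then have 1: "FF Q (sa Q A1) \<le> FF Q (sa Q A2)" by (intro FF_mono sa_ge)
  have "0 \<le> Bf A2" using assms Bf_nonneg by auto
  moreover have "Bf A2 \<le> Bf A1" using assms Bf_mono by auto
  ultimately have "sb Q A2 \<le> sb Q A1" unfolding sb_def by (intro real_sqrt_le_mono add_left_mono power_mono) auto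
  then have 2: "FF Q (sb Q A2) \<le> FF Q (sb Q A1)" by (intro FF_mono sb_ge)
  show ?thesis using 1 2 assms by (simp add: g2_def)
qed

lemma g2_anti_le: "0 \<le> A1 \<Longrightarrow> A1 \<le> A2 \<Longrightarrow> A2 \<le> AM \<Longrightarrow> g2 Q A2 \<le> g2 Q A1"
  using g2_strict_anti[of A1 A2 Q] by (cases "A1 = A2") auto

lemma g2_at0: "0 < g2 Q 0"
proof -
  have "Bf 0 \<noteq> 0" using Bf_pos AM_pos by (metis less_irrefl)
  then have "\<bar>Q\<bar> < sb Q 0" unfolding sb_def by (rule sq_gt)
  then have "FF Q \<bar>Q\<bar> < FF Q (sb Q 0)" by (intro FF_mono_strict) auto
  moreover have "sa Q 0 = \<bar>Q\<bar>" by (simp add: sa_def)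
  ultimately show ?thesis using lpos by (simp add: g2_def)
qed

lemma g2_atAM: "g2 Q AM < 0"
proof -
  have "AM \<noteq> 0" using AM_pos by simp
  then have "\<bar>Q\<bar> < sa Q AM" unfolding sa_def by (rule sq_gt)
  then have "FF Q \<bar>Q\<bar> < FF Q (sa Q AM)" by (intro FF_mono_strict) auto
  moreover have "sb Q AM = \<bar>Q\<bar>" by (simp add: sb_def Bf_AM)
  moreover have "l < AM" using AM_eq rpos kpos by simp
  ultimately show ?thesis by (simp add: g2_def)
qed

lemma g2_cont: "continuous_on {0..AM} (g2 Q)"
proof (cases "Q = 0")
  case True
  have "g2 Q = (\<lambda>A. - (A - l) - sqrt (0 + A^2) + sqrt (0 + (k * (l - A) + r)^2))"
    using True by (simp add: fun_eq_iff g2_def FF_def sa_def sb_def Bf_eq)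
  then show ?thesis by (simp only:) (intro continuous_intros)
next
  case False
  have pos: "\<And>X. 0 < sqrt (Q^2 + X^2) + d * Q" using sq_plus False by auto
  have "g2 Q = (\<lambda>A. - (A - l) - (sqrt (Q^2 + A^2) - d * Q * ln (sqrt (Q^2 + A^2) + d * Q))
      + (sqrt (Q^2 + (k * (l - A) + r)^2) - d * Q * ln (sqrt (Q^2 + (k * (l - A) + r)^2) + d * Q)))"
    by (simp add: fun_eq_iff g2_def FF_def sa_def sb_def Bf_eq)
  then show ?thesis
    by (simp only:) (intro continuous_intros; use pos in \<open>simp add: less_imp_neq[symmetric]\<close>)
qed

lemma g2_root: "\<exists>!A. 0 < A \<and> A < AM \<and> g2 Q A = 0"
proof -
  obtain A where A: "0 \<le> A" "A \<le> AM" "g2 Q A = 0"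
    using IVT2'[of "g2 Q" AM 0 0, OF _ _ _ g2_cont] g2_at0[of Q] g2_atAM[of Q] AM_pos by auto
  have "A \<noteq> 0" "A \<noteq> AM" using A g2_at0[of Q] g2_atAM[of Q] by auto
  then have A': "0 < A" "A < AM" using A by auto
  moreover have "B = A" if "0 < B" "B < AM" "g2 Q B = 0" for B
    using g2_strict_anti[of A B Q] g2_strict_anti[of B A Q] A A' that by (metis less_irrefl not_less_iff_gr_or_eq less_imp_le)
  ultimately show ?thesis using A by blast
qed

definition "Aq Q = (THE A. 0 < A \<and> A < AM \<and> g2 Q A = 0)"

lemma Aq: "0 < Aq Q" "Aq Q < AM" "g2 Q (Aq Q) = 0"
  using theI'[OF g2_root[of Q]] unfolding Aq_def by auto

lemma Aq_unique: "0 < A \<Longrightarrow> A < AM \<Longrightarrow> g2 Q A = 0 \<Longrightarrow> A = Aq Q"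
  using g2_root[of Q] Aq[of Q] by blast

lemma sb_sa: "sb Q A = sa Q (Bf A)" by (simp add: sb_def sa_def)
lemma Sa_eq: "pnp_Sa Q A = sa Q A" by (simp add: pnp_Sa_def sa_def)
lemma Sb_eq: "pnp_Sb l r al be Q A = sb Q A" by (simp add: pnp_Sb_def sb_def Bf_def)
lemma B_eq: "pnp_B l r al be A = Bf A" by (simp add: Bf_def)

lemma g2_eq: assumes "0 < A" "A < AM" shows "pnp_G2 l r al be Q A d = g2 Q A"
proof -
  have p: "0 < sa Q A + d * Q" "0 < sb Q A + d * Q" using assms Bf_pos[of A] sq_plus unfolding sa_def sb_def by auto
  have "pnp_G2 l r al be Q A d = d * Q * ln ((sa Q A + d * Q) / (sb Q A + d * Q)) - (A - l + sa Q A - sb Q A)"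
    by (simp only: pnp_G2_def pnp_N_def Let_def Sa_eq Sb_eq)
  also have "ln ((sa Q A + d * Q) / (sb Q A + d * Q)) = ln (sa Q A + d * Q) - ln (sb Q A + d * Q)"
    using p by (simp add: ln_div)
  finally show ?thesis by (simp add: g2_def FF_def algebra_simps)
qed

lemma g1_eq: assumes "0 < A" "A < AM" shows "pnp_G1 l r al be Q A d = g1 Q A"
proof -
  have B: "0 < Bf A" using assms Bf_pos by auto
  have p: "0 < sa Q A + d * Q" "0 < sb Q A + d * Q" using assms B sq_plus unfolding sa_def sb_def by auto
  have m: "0 < sa Q A - Q" "0 < sb Q A - Q" using assms B sq_minus unfolding sa_def sb_def by auto
  have "pnp_G1 l r al be Q A d = d * (ln ((sa Q A + d * Q) / (sb Q A + d * Q)) + ln (l / r))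
      - (1 + d) * ln (A / Bf A) + ln ((sa Q A - Q) / (sb Q A - Q))"
    by (simp only: pnp_G1_def Let_def Sa_eq Sb_eq B_eq)
  also have "ln ((sa Q A + d * Q) / (sb Q A + d * Q)) = ln (sa Q A + d * Q) - ln (sb Q A + d * Q)"
    using p by (simp add: ln_div)
  also have "ln (A / Bf A) = ln A - ln (Bf A)" using assms B by (simp add: ln_div)
  also have "ln ((sa Q A - Q) / (sb Q A - Q)) = ln (sa Q A - Q) - ln (sb Q A - Q)"
    using m by (simp add: ln_div)
  finally show ?thesis unfolding g1_def PP_def sa_def[symmetric] sb_sa
    by (simp add: algebra_simps)
qed

lemma rev_iff: "reversal_charge l r al be d V Q \<longleftrightarrow> g1 Q (Aq Q) = V"
proof
  assume "reversal_charge l r al be d V Q"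
  then obtain A where A: "0 < A" "A < AM" "pnp_G1 l r al be Q A d = V" "pnp_G2 l r al be Q A d = 0"
    unfolding reversal_charge_def AM_def by auto
  then have "A = Aq Q" using g2_eq Aq_unique by auto
  then show "g1 Q (Aq Q) = V" using A g1_eq by auto
next
  assume V: "g1 Q (Aq Q) = V"
  have "pnp_G1 l r al be Q (Aq Q) d = V" using g1_eq[OF Aq(1,2)] V by simp
  moreover have "pnp_G2 l r al be Q (Aq Q) d = 0" using g2_eq[OF Aq(1,2)] Aq(3) by simp
  moreover have "Aq Q < pnp_AM l r al be" using Aq(2) by (simp add: AM_def)
  ultimately show "reversal_charge l r al be d V Q" unfolding reversal_charge_def
    using Aq(1) by blast
qed


lemma DERIV_sqQ: "X \<noteq> 0 \<Longrightarrow> ((\<lambda>Q. sqrt (Q^2 + X^2)) has_real_derivative Q / sqrt (Q^2 + X^2)) (at Q)"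
proof -
  assume X: "X \<noteq> 0"
  have Q2: "0 < Q^2 + X^2" using X by (simp add: add_nonneg_pos)
  show ?thesis
    using Q2 by (auto intro!: derivative_eq_intros simp: field_simps)
qed

lemma DERIV_sqX: "X \<noteq> 0 \<Longrightarrow> ((\<lambda>X. sqrt (Q^2 + X^2)) has_real_derivative X / sqrt (Q^2 + X^2)) (at X)"
proof -
  assume X: "X \<noteq> 0"
  have Q2: "0 < Q^2 + X^2" using X by (simp add: add_nonneg_pos)
  show ?thesis
    using Q2 by (auto intro!: derivative_eq_intros simp: field_simps)
qed

lemma DERIV_form_Q:
  assumes "(s has_real_derivative s') (at Q)" "0 < s Q + d * Q"
  shows "((\<lambda>Q. s Q - d * Q * ln (s Q + d * Q)) has_real_derivative
     (s' - (d * ln (s Q + d * Q) + d * Q * ((s' + d) / (s Q + d * Q))))) (at Q)"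
  using assms by (auto intro!: derivative_eq_intros)

lemma DERIV_form_X:
  assumes "(s has_real_derivative s') (at X)" "0 < s X + d * Q"
  shows "((\<lambda>X. s X - d * Q * ln (s X + d * Q)) has_real_derivative
     (s' - d * Q * (s' / (s X + d * Q)))) (at X)"
  using assms by (auto intro!: derivative_eq_intros)

lemma FFs_dQ:
  assumes X: "X \<noteq> 0"
  shows "((\<lambda>Q. FF Q (sqrt (Q^2 + X^2))) has_real_derivative
     (cc * Q / (sqrt (Q^2 + X^2) + d * Q) - d * ln (sqrt (Q^2 + X^2) + d * Q))) (at Q)"
proof -
  define S where "S = sqrt (Q^2 + X^2)"
  have S0: "0 < S" using sq_gt[OF X, of Q] S_def by linarith
  have p: "0 < S + d * Q" using sq_plus[of X Q] X S_def by auto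
  have D: "((\<lambda>Q. sqrt (Q^2 + X^2) - d * Q * ln (sqrt (Q^2 + X^2) + d * Q)) has_real_derivative
      (Q / S - (d * ln (S + d * Q) + d * Q * ((Q / S + d) / (S + d * Q))))) (at Q)"
    unfolding S_def using p[unfolded S_def]
    by (rule DERIV_form_Q[OF DERIV_sqQ[OF X]])
  have E: "Q / S - (d * ln (S + d * Q) + d * Q * ((Q / S + d) / (S + d * Q)))
      = cc * Q / (S + d * Q) - d * ln (S + d * Q)"
  proof -
    have "Q / S - (d * ln (S + d * Q) + d * Q * ((Q / S + d) / (S + d * Q)))
      = (Q / S - d * Q * ((Q / S + d) / (S + d * Q))) - d * ln (S + d * Q)" by (simp add: algebra_simps)
    also have "Q / S - d * Q * ((Q / S + d) / (S + d * Q)) = cc * Q / (S + d * Q)"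
      using alg1[of S "S + d * Q" d Q] S0 p unfolding cc_def by simp
    finally show ?thesis .
  qed
  from D[unfolded E] show ?thesis unfolding FF_def S_def .
qed

lemma FFs_dX:
  assumes X: "X \<noteq> 0"
  shows "((\<lambda>X. FF Q (sqrt (Q^2 + X^2))) has_real_derivative X / (sqrt (Q^2 + X^2) + d * Q)) (at X)"
proof -
  define S where "S = sqrt (Q^2 + X^2)"
  have S0: "0 < S" using sq_gt[OF X, of Q] S_def by linarith
  have p: "0 < S + d * Q" using sq_plus[of X Q] X S_def by auto
  have D: "((\<lambda>X. sqrt (Q^2 + X^2) - d * Q * ln (sqrt (Q^2 + X^2) + d * Q)) has_real_derivative
      (X / S - d * Q * (X / S / (S + d * Q)))) (at X)"
    unfolding S_def using p[unfolded S_def]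
    by (rule DERIV_form_X[OF DERIV_sqX[OF X]])
  have E: "X / S - d * Q * (X / S / (S + d * Q)) = X / (S + d * Q)"
    using alg2[of S "S + d * Q" d Q X] S0 p by simp
  from D[unfolded E] show ?thesis unfolding FF_def S_def .
qed


lemma DERIV_PPform_Q:
  assumes "(s has_real_derivative s') (at Q)" "0 < s Q + d * Q" "0 < s Q - Q"
  shows "((\<lambda>Q. d * ln (s Q + d * Q) + ln (s Q - Q) - (1 + d) * ln X) has_real_derivative
     (d * ((s' + d) / (s Q + d * Q)) + (s' - 1) / (s Q - Q))) (at Q)"
  using assms by (auto intro!: derivative_eq_intros)

lemma DERIV_PPform_X:
  assumes "(s has_real_derivative s') (at X)" "0 < s X + d * Q" "0 < s X - Q" "0 < X"
  shows "((\<lambda>X. d * ln (s X + d * Q) + ln (s X - Q) - (1 + d) * ln X) has_real_derivative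
     (d * (s' / (s X + d * Q)) + s' / (s X - Q) - (1 + d) / X)) (at X)"
  using assms by (auto intro!: derivative_eq_intros simp: field_simps)

lemma PP_dQ:
  assumes X: "0 < X"
  shows "((\<lambda>Q. PP Q X) has_real_derivative - cc / (sqrt (Q^2 + X^2) + d * Q)) (at Q)"
proof -
  define S where "S = sqrt (Q^2 + X^2)"
  have X0: "X \<noteq> 0" using X by simp
  have S0: "0 < S" using sq_gt[OF X0, of Q] S_def by linarith
  have p: "0 < S + d * Q" using sq_plus[of X Q] X0 S_def by auto
  have m: "0 < S - Q" using sq_minus[OF X0, of Q] S_def by auto
  have D: "((\<lambda>Q. d * ln (sqrt (Q^2 + X^2) + d * Q) + ln (sqrt (Q^2 + X^2) - Q) - (1 + d) * ln X) has_real_derivative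
      (d * ((Q / S + d) / (S + d * Q)) + (Q / S - 1) / (S - Q))) (at Q)"
    unfolding S_def using p[unfolded S_def] m[unfolded S_def]
    by (rule DERIV_PPform_Q[OF DERIV_sqQ[OF X0]])
  have E: "d * ((Q / S + d) / (S + d * Q)) + (Q / S - 1) / (S - Q) = - cc / (S + d * Q)"
    using alg3[of S "S + d * Q" "S - Q" d Q] S0 p m unfolding cc_def by simp
  from D[unfolded E] show ?thesis unfolding PP_def S_def .
qed

lemma PP_dX:
  assumes X: "0 < X"
  shows "((\<lambda>X. PP Q X) has_real_derivative cc * Q / (X * (sqrt (Q^2 + X^2) + d * Q))) (at X)"
proof -
  define S where "S = sqrt (Q^2 + X^2)"
  have X0: "X \<noteq> 0" using X by simp
  have S0: "0 < S" using sq_gt[OF X0, of Q] S_def by linarith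
  have p: "0 < S + d * Q" using sq_plus[of X Q] X0 S_def by auto
  have m: "0 < S - Q" using sq_minus[OF X0, of Q] S_def by auto
  have SS: "X^2 = S^2 - Q^2" using S_def by (simp add: add_nonneg_nonneg)
  have D: "((\<lambda>X. d * ln (sqrt (Q^2 + X^2) + d * Q) + ln (sqrt (Q^2 + X^2) - Q) - (1 + d) * ln X) has_real_derivative
      (d * (X / S / (S + d * Q)) + X / S / (S - Q) - (1 + d) / X)) (at X)"
    unfolding S_def using p[unfolded S_def] m[unfolded S_def] X
    by (rule DERIV_PPform_X[OF DERIV_sqX[OF X0]])
  have E: "d * (X / S / (S + d * Q)) + X / S / (S - Q) - (1 + d) / X = cc * Q / (X * (S + d * Q))"
    using alg4[of S "S + d * Q" "S - Q" X d Q] S0 p m X0 SS unfolding cc_def by simp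
  from D[unfolded E] show ?thesis unfolding PP_def S_def .
qed

definition "ap Q A = sa Q A + d * Q"
definition "bp Q A = sb Q A + d * Q"
definition "G2Q Q A = - (cc * Q / ap Q A - d * ln (ap Q A)) + (cc * Q / bp Q A - d * ln (bp Q A))"
definition "G2A Q A = - 1 - A / ap Q A - k * (Bf A / bp Q A)"
definition "G1Q Q A = - cc / ap Q A + cc / bp Q A"
definition "G1A Q A = cc * Q / (A * ap Q A) + k * (cc * Q / (Bf A * bp Q A))"

lemma DERIV_Bf: "(Bf has_real_derivative - k) (at A)"
  unfolding Bf_eq[abs_def] by (auto intro!: derivative_eq_intros)

lemma g2_dQ: assumes "0 < A" "A < AM" shows "((\<lambda>Q. g2 Q A) has_real_derivative G2Q Q A) (at Q)"
proof -
  have A0: "A \<noteq> 0" and B0: "Bf A \<noteq> 0" using assms Bf_pos[of A] by auto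
  have "((\<lambda>Q. - (A - l) - FF Q (sqrt (Q^2 + A^2)) + FF Q (sqrt (Q^2 + (Bf A)^2))) has_real_derivative
     (0 - (cc * Q / (sqrt (Q^2 + A^2) + d * Q) - d * ln (sqrt (Q^2 + A^2) + d * Q))
       + (cc * Q / (sqrt (Q^2 + (Bf A)^2) + d * Q) - d * ln (sqrt (Q^2 + (Bf A)^2) + d * Q)))) (at Q)"
    by (intro DERIV_add DERIV_diff DERIV_const FFs_dQ[OF A0] FFs_dQ[OF B0])
  then show ?thesis unfolding g2_def G2Q_def ap_def bp_def sa_def sb_def by simp
qed

lemma g2_dA: assumes "0 < A" "A < AM" shows "((\<lambda>A. g2 Q A) has_real_derivative G2A Q A) (at A)"
proof -
  have A0: "A \<noteq> 0" and B0: "Bf A \<noteq> 0" using assms Bf_pos[of A] by auto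
  have dB: "((\<lambda>A. FF Q (sqrt (Q^2 + (Bf A)^2))) has_real_derivative (Bf A / (sqrt (Q^2 + (Bf A)^2) + d * Q)) * (- k)) (at A)"
    by (rule DERIV_chain2[OF FFs_dX[OF B0] DERIV_Bf])
  have dm: "((\<lambda>A. - (A - l)) has_real_derivative -1) (at A)" by (auto intro!: derivative_eq_intros)
  have "((\<lambda>A. - (A - l) - FF Q (sqrt (Q^2 + A^2)) + FF Q (sqrt (Q^2 + (Bf A)^2))) has_real_derivative
     (-1 - A / (sqrt (Q^2 + A^2) + d * Q) + (Bf A / (sqrt (Q^2 + (Bf A)^2) + d * Q)) * (- k))) (at A)"
    by (intro DERIV_add DERIV_diff dm FFs_dX[OF A0] dB)
  then show ?thesis unfolding g2_def G2A_def ap_def bp_def sa_def sb_def by (simp add: algebra_simps)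
qed

lemma g1_dQ: assumes "0 < A" "A < AM" shows "((\<lambda>Q. g1 Q A) has_real_derivative G1Q Q A) (at Q)"
proof -
  have A0: "0 < A" and B0: "0 < Bf A" using assms Bf_pos[of A] by auto
  have "((\<lambda>Q. d * ln (l / r) + PP Q A - PP Q (Bf A)) has_real_derivative
     (0 + - cc / (sqrt (Q^2 + A^2) + d * Q) - - cc / (sqrt (Q^2 + (Bf A)^2) + d * Q))) (at Q)"
    by (intro DERIV_add DERIV_diff DERIV_const PP_dQ[OF A0] PP_dQ[OF B0])
  then show ?thesis unfolding g1_def G1Q_def ap_def bp_def sa_def sb_def by simp
qed

lemma g1_dA: assumes "0 < A" "A < AM" shows "((\<lambda>A. g1 Q A) has_real_derivative G1A Q A) (at A)"
proof -
  have A0: "0 < A" and B0: "0 < Bf A" using assms Bf_pos[of A] by auto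
  have dB: "((\<lambda>A. PP Q (Bf A)) has_real_derivative (cc * Q / (Bf A * (sqrt (Q^2 + (Bf A)^2) + d * Q))) * (- k)) (at A)"
    by (rule DERIV_chain2[OF PP_dX[OF B0] DERIV_Bf])
  have "((\<lambda>A. d * ln (l / r) + PP Q A - PP Q (Bf A)) has_real_derivative
     (0 + cc * Q / (A * (sqrt (Q^2 + A^2) + d * Q)) - (cc * Q / (Bf A * (sqrt (Q^2 + (Bf A)^2) + d * Q))) * (- k))) (at A)"
    by (intro DERIV_add DERIV_diff DERIV_const PP_dX[OF A0] dB)
  then show ?thesis unfolding g1_def G1A_def ap_def bp_def sa_def sb_def by (simp add: algebra_simps)
qed


lemma pos_at: assumes "0 < A" "A < AM"
  shows "0 < ap Q A" "0 < bp Q A" "0 < Bf A" "\<bar>d * Q\<bar> < sa Q A" "\<bar>d * Q\<bar> < sb Q A"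
proof -
  show B: "0 < Bf A" using assms Bf_pos by auto
  show "\<bar>d * Q\<bar> < sa Q A" using sq_dQ[of A Q] assms unfolding sa_def by auto
  show "\<bar>d * Q\<bar> < sb Q A" using sq_dQ[of "Bf A" Q] B unfolding sb_def by auto
  show "0 < ap Q A" using sq_plus[of A Q] assms unfolding ap_def sa_def by auto
  show "0 < bp Q A" using sq_plus[of "Bf A" Q] B unfolding bp_def sb_def by auto
qed

lemma cont_G2Q: assumes "0 < A" "A < AM" shows "isCont (\<lambda>p. G2Q (fst p) (snd p)) (Q, A)"
proof -
  have "0 < ap Q A" "0 < bp Q A" using pos_at assms by auto
  then show ?thesis unfolding G2Q_def ap_def bp_def sa_def sb_def Bf_eq
    by (intro continuous_intros) auto
qed

lemma cont_G2A: assumes "0 < A" "A < AM" shows "isCont (\<lambda>p. G2A (fst p) (snd p)) (Q, A)"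
proof -
  have "0 < ap Q A" "0 < bp Q A" using pos_at assms by auto
  then show ?thesis unfolding G2A_def ap_def bp_def sa_def sb_def Bf_eq
    by (intro continuous_intros) auto
qed

lemma cont_G1Q: assumes "0 < A" "A < AM" shows "isCont (\<lambda>p. G1Q (fst p) (snd p)) (Q, A)"
proof -
  have "0 < ap Q A" "0 < bp Q A" using pos_at assms by auto
  then show ?thesis unfolding G1Q_def ap_def bp_def sa_def sb_def Bf_eq
    by (intro continuous_intros) auto
qed

lemma cont_G1A: assumes "0 < A" "A < AM" shows "isCont (\<lambda>p. G1A (fst p) (snd p)) (Q, A)"
proof -
  have "0 < ap Q A" "0 < bp Q A" "0 < Bf A" using pos_at assms by auto
  then show ?thesis using assms unfolding G1A_def ap_def bp_def sa_def sb_def Bf_eq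
    by (intro continuous_intros) auto
qed

lemma Aq_cont: "isCont Aq Q0"
proof -
  define A0 where "A0 = Aq Q0"
  have A0: "0 < A0" "A0 < AM" "g2 Q0 A0 = 0" using Aq unfolding A0_def by auto
  have "\<forall>\<^sub>F y in at Q0. dist (Aq y) A0 < e" if e: "0 < e" for e
  proof -
    define e' where "e' = min e (min A0 (AM - A0)) / 2"
    have m: "min e (min A0 (AM - A0)) \<le> AM - A0" "min e (min A0 (AM - A0)) \<le> A0" "min e (min A0 (AM - A0)) \<le> e"
      "0 < min e (min A0 (AM - A0))" using e A0 by auto
    have e': "0 < e'" "e' < e" "0 < A0 - e'" "A0 + e' < AM" using m unfolding e'_def by linarith+
    have lo: "0 < g2 Q0 (A0 - e')" using g2_strict_anti[of "A0 - e'" A0 Q0] e' A0 by auto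
    have hi: "g2 Q0 (A0 + e') < 0" using g2_strict_anti[of A0 "A0 + e'" Q0] e' A0 by auto
    have c1: "isCont (\<lambda>Q. g2 Q (A0 - e')) Q0" using g2_dQ[of "A0 - e'" Q0] e' by (auto intro: DERIV_isCont)
    have c2: "isCont (\<lambda>Q. g2 Q (A0 + e')) Q0" using g2_dQ[of "A0 + e'" Q0] e' by (auto intro: DERIV_isCont)
    have ev1: "\<forall>\<^sub>F y in at Q0. 0 < g2 y (A0 - e')"
      using c1 lo unfolding isCont_def by (rule order_tendstoD)
    have ev2: "\<forall>\<^sub>F y in at Q0. g2 y (A0 + e') < 0"
      using c2 hi unfolding isCont_def by (rule order_tendstoD)
    show ?thesis using ev1 ev2
    proof eventually_elim
      case (elim y)
      have y: "0 < Aq y" "Aq y < AM" "g2 y (Aq y) = 0" using Aq by auto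
      have "\<not> Aq y \<le> A0 - e'"
      proof
        assume "Aq y \<le> A0 - e'"
        then have "g2 y (A0 - e') \<le> g2 y (Aq y)" using g2_anti_le[of "Aq y" "A0 - e'" y] y e' by auto
        then show False using elim y by simp
      qed
      moreover have "\<not> A0 + e' \<le> Aq y"
      proof
        assume "A0 + e' \<le> Aq y"
        then have "g2 y (Aq y) \<le> g2 y (A0 + e')" using g2_anti_le[of "A0 + e'" "Aq y" y] y e' by auto
        then show False using elim y by simp
      qed
      ultimately show ?case using e' by (simp add: dist_real_def abs_less_iff)
    qed
  qed
  then show ?thesis unfolding isCont_def A0_def by (rule tendstoI)
qed

definition "VF Q = g1 Q (Aq Q)"

lemma Aq_deriv: "(Aq has_real_derivative (- G2Q Q (Aq Q) / G2A Q (Aq Q))) (at Q)"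
proof (rule implicit_deriv[where f = g2 and fx = G2Q and fy = G2A and lo = 0 and hi = AM])
  show "\<And>x. 0 < Aq x \<and> Aq x < AM" using Aq by auto
  show "\<And>x z. 0 < z \<Longrightarrow> z < AM \<Longrightarrow> ((\<lambda>x. g2 x z) has_real_derivative G2Q x z) (at x)" by (rule g2_dQ)
  show "\<And>x z. 0 < z \<Longrightarrow> z < AM \<Longrightarrow> ((\<lambda>z. g2 x z) has_real_derivative G2A x z) (at z)" by (rule g2_dA)
  show "isCont Aq Q" by (rule Aq_cont)
  show "isCont (\<lambda>p. G2Q (fst p) (snd p)) (Q, Aq Q)" using Aq by (intro cont_G2Q) auto
  show "isCont (\<lambda>p. G2A (fst p) (snd p)) (Q, Aq Q)" using Aq by (intro cont_G2A) auto
  show "\<And>x. g2 x (Aq x) = 0" using Aq by auto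
  have "0 < ap Q (Aq Q)" "0 < bp Q (Aq Q)" "0 < Bf (Aq Q)" using pos_at Aq by auto
  then have "G2A Q (Aq Q) < 0" using Aq(1)[of Q] kpos unfolding G2A_def
    by (smt (verit) divide_pos_pos mult_pos_pos)
  then show "G2A Q (Aq Q) \<noteq> 0" by simp
qed

lemma VF_deriv: "(VF has_real_derivative (G1Q Q (Aq Q) + G1A Q (Aq Q) * (- G2Q Q (Aq Q) / G2A Q (Aq Q)))) (at Q)"
  unfolding VF_def
proof (rule chain_deriv[where fx = G1Q and fy = G1A and lo = 0 and hi = AM])
  show "\<And>x. 0 < Aq x \<and> Aq x < AM" using Aq by auto
  show "\<And>x z. 0 < z \<Longrightarrow> z < AM \<Longrightarrow> ((\<lambda>x. g1 x z) has_real_derivative G1Q x z) (at x)" by (rule g1_dQ)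
  show "\<And>x z. 0 < z \<Longrightarrow> z < AM \<Longrightarrow> ((\<lambda>z. g1 x z) has_real_derivative G1A x z) (at z)" by (rule g1_dA)
  show "(Aq has_real_derivative (- G2Q Q (Aq Q) / G2A Q (Aq Q))) (at Q)" by (rule Aq_deriv)
  show "isCont (\<lambda>p. G1Q (fst p) (snd p)) (Q, Aq Q)" using Aq by (intro cont_G1Q) auto
  show "isCont (\<lambda>p. G1A (fst p) (snd p)) (Q, Aq Q)" using Aq by (intro cont_G1A) auto
qed


lemma sa_sq: "(sa Q A)^2 = Q^2 + A^2" unfolding sa_def by (simp add: add_nonneg_nonneg)
lemma sb_sq: "(sb Q A)^2 = Q^2 + (Bf A)^2" unfolding sb_def by (simp add: add_nonneg_nonneg)

lemma sa_le_sb: assumes "0 < A" "A < AM" "sa Q A \<le> sb Q A" shows "A \<le> Bf A"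
proof -
  have "Q^2 + A^2 \<le> Q^2 + (Bf A)^2" using assms(3) unfolding sa_def sb_def by simp
  then have "A^2 \<le> (Bf A)^2" by simp
  then show ?thesis using assms Bf_pos[of A] by (simp add: power2_le_iff_abs_le)
qed

lemma sb_le_sa: assumes "0 < A" "A < AM" "sb Q A \<le> sa Q A" shows "Bf A \<le> A"
proof -
  have "Q^2 + (Bf A)^2 \<le> Q^2 + A^2" using assms(3) unfolding sa_def sb_def by simp
  then have "(Bf A)^2 \<le> A^2" by simp
  then show ?thesis using assms Bf_pos[of A] by (simp add: power2_le_iff_abs_le)
qed

lemma curve_t: "l - Aq Q = FF Q (sa Q (Aq Q)) - FF Q (sb Q (Aq Q))"
  using Aq(3)[of Q] by (simp add: g2_def)

lemma curve_B: "Bf (Aq Q) = k * (l - Aq Q) + r" by (simp add: Bf_eq)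

lemma curve_gt: assumes "r < l" shows "sb Q (Aq Q) < sa Q (Aq Q)" "0 < l - Aq Q"
proof -
  let ?A = "Aq Q"
  have A: "0 < ?A" "?A < AM" using Aq by auto
  show 1: "sb Q ?A < sa Q ?A"
  proof (rule ccontr)
    assume "\<not> sb Q ?A < sa Q ?A"
    then have le: "sa Q ?A \<le> sb Q ?A" by simp
    then have "FF Q (sa Q ?A) \<le> FF Q (sb Q ?A)" by (intro FF_mono sa_ge)
    then have "l \<le> ?A" using curve_t[of Q] by simp
    then have "Bf ?A \<le> r" using curve_B[of Q] kpos by (simp add: mult_nonneg_nonpos)
    moreover have "?A \<le> Bf ?A" using sa_le_sb[OF A le] .
    ultimately show False using \<open>l \<le> ?A\<close> assms by simp
  qed
  have "FF Q (sb Q ?A) < FF Q (sa Q ?A)" using 1 by (intro FF_mono_strict sb_ge)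
  then show "0 < l - ?A" using curve_t[of Q] by simp
qed

lemma curve_lt: assumes "l < r" shows "sa Q (Aq Q) < sb Q (Aq Q)" "l - Aq Q < 0"
proof -
  let ?A = "Aq Q"
  have A: "0 < ?A" "?A < AM" using Aq by auto
  show 1: "sa Q ?A < sb Q ?A"
  proof (rule ccontr)
    assume "\<not> sa Q ?A < sb Q ?A"
    then have le: "sb Q ?A \<le> sa Q ?A" by simp
    then have "FF Q (sb Q ?A) \<le> FF Q (sa Q ?A)" by (intro FF_mono sb_ge)
    then have "?A \<le> l" using curve_t[of Q] by simp
    then have "r \<le> Bf ?A" using curve_B[of Q] kpos by simp
    moreover have "Bf ?A \<le> ?A" using sb_le_sa[OF A le] .
    ultimately show False using \<open>?A \<le> l\<close> assms by simp
  qed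
  have "FF Q (sa Q ?A) < FF Q (sb Q ?A)" using 1 by (intro FF_mono_strict sa_ge)
  then show "l - ?A < 0" using curve_t[of Q] by simp
qed

lemma curve_eq: assumes "l = r" shows "Aq Q = l"
proof -
  have "l < AM" using AM_eq rpos kpos by simp
  moreover have "g2 Q l = 0"
  proof -
    have "Bf l = k * (l - l) + r" by (rule Bf_eq)
    moreover have "k * (l - l) = 0" by simp
    ultimately have "Bf l = l" using assms by linarith
    then have "sb Q l = sa Q l" by (simp add: sb_def sa_def)
    then show ?thesis by (simp add: g2_def)
  qed
  ultimately show ?thesis using Aq_unique[of l Q] lpos by simp
qed

lemma VF'_eq:
  assumes A: "0 < A" "A < AM"
  shows "G1Q Q A + G1A Q A * (- G2Q Q A / G2A Q A) = cc *
     ((1/(sb Q A + d*Q) - 1/(sa Q A + d*Q))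
     + ((sa Q A - d*Q)*((sa Q A + d*Q) - (sb Q A + d*Q))/(sb Q A + d*Q) + d*Q*(ln (sa Q A + d*Q) - ln (sb Q A + d*Q)))/(A*(sa Q A + d*Q))
     + k*(((sb Q A - d*Q)*((sa Q A + d*Q) - (sb Q A + d*Q))/(sa Q A + d*Q) + d*Q*(ln (sa Q A + d*Q) - ln (sb Q A + d*Q)))/(Bf A*(sb Q A + d*Q))))
     / (1 + A/(sa Q A + d*Q) + k*(Bf A/(sb Q A + d*Q)))"
proof -
  have p: "0 < ap Q A" "0 < bp Q A" "0 < Bf A" using pos_at[OF A] by auto
  have M: "0 < 1 + A/(sa Q A + d*Q) + k*(Bf A/(sb Q A + d*Q))"
    using p A kpos unfolding ap_def bp_def by (smt (verit) divide_pos_pos mult_pos_pos)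
  show ?thesis unfolding G1Q_def G1A_def G2Q_def G2A_def ap_def bp_def
    by (rule key_ident) (use A p M sa_sq sb_sq in \<open>auto simp: ap_def bp_def cc_def\<close>)
qed

lemma VF'_pos: assumes "r < l" shows "0 < G1Q Q (Aq Q) + G1A Q (Aq Q) * (- G2Q Q (Aq Q) / G2A Q (Aq Q))"
proof -
  let ?A = "Aq Q"
  have A: "0 < ?A" "?A < AM" using Aq by auto
  have p: "0 < ap Q ?A" "0 < bp Q ?A" "0 < Bf ?A" "\<bar>d * Q\<bar> < sa Q ?A" "\<bar>d * Q\<bar> < sb Q ?A" using pos_at[OF A] by auto
  have M: "0 < 1 + ?A/(sa Q ?A + d*Q) + k*(Bf ?A/(sb Q ?A + d*Q))"
    using p A kpos unfolding ap_def bp_def by (smt (verit) divide_pos_pos mult_pos_pos)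
  have t: "l - ?A = (sa Q ?A - sb Q ?A) - d*Q*(ln (sa Q ?A + d*Q) - ln (sb Q ?A + d*Q))"
    using curve_t[of Q] by (simp add: FF_def algebra_simps)
  have X: "0 < (1/(sb Q ?A + d*Q) - 1/(sa Q ?A + d*Q))
     + ((sa Q ?A - d*Q)*((sa Q ?A + d*Q) - (sb Q ?A + d*Q))/(sb Q ?A + d*Q) + d*Q*(ln (sa Q ?A + d*Q) - ln (sb Q ?A + d*Q)))/(?A*(sa Q ?A + d*Q))
     + k*(((sb Q ?A - d*Q)*((sa Q ?A + d*Q) - (sb Q ?A + d*Q))/(sa Q ?A + d*Q) + d*Q*(ln (sa Q ?A + d*Q) - ln (sb Q ?A + d*Q)))/(Bf ?A*(sb Q ?A + d*Q)))"
  proof (rule key_pos[OF A(1) p(3) kpos p(4) p(5) curve_gt(1)[OF assms] t curve_gt(2)[OF assms]])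
    show "k * (l - ?A) < Bf ?A" using curve_B[of Q] rpos by simp
  qed
  show ?thesis unfolding VF'_eq[OF A] using cc_pos X M by simp
qed

lemma VF'_neg: assumes "l < r" shows "G1Q Q (Aq Q) + G1A Q (Aq Q) * (- G2Q Q (Aq Q) / G2A Q (Aq Q)) < 0"
proof -
  let ?A = "Aq Q"
  have A: "0 < ?A" "?A < AM" using Aq by auto
  have p: "0 < ap Q ?A" "0 < bp Q ?A" "0 < Bf ?A" "\<bar>d * Q\<bar> < sa Q ?A" "\<bar>d * Q\<bar> < sb Q ?A" using pos_at[OF A] by auto
  have M: "0 < 1 + ?A/(sa Q ?A + d*Q) + k*(Bf ?A/(sb Q ?A + d*Q))"
    using p A kpos unfolding ap_def bp_def by (smt (verit) divide_pos_pos mult_pos_pos)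
  have t: "l - ?A = (sa Q ?A - sb Q ?A) - d*Q*(ln (sa Q ?A + d*Q) - ln (sb Q ?A + d*Q))"
    using curve_t[of Q] by (simp add: FF_def algebra_simps)
  have X: "(1/(sb Q ?A + d*Q) - 1/(sa Q ?A + d*Q))
     + ((sa Q ?A - d*Q)*((sa Q ?A + d*Q) - (sb Q ?A + d*Q))/(sb Q ?A + d*Q) + d*Q*(ln (sa Q ?A + d*Q) - ln (sb Q ?A + d*Q)))/(?A*(sa Q ?A + d*Q))
     + k*(((sb Q ?A - d*Q)*((sa Q ?A + d*Q) - (sb Q ?A + d*Q))/(sa Q ?A + d*Q) + d*Q*(ln (sa Q ?A + d*Q) - ln (sb Q ?A + d*Q)))/(Bf ?A*(sb Q ?A + d*Q))) < 0"
  proof (rule key_neg[OF A(1) p(3) kpos p(4) p(5) curve_lt(1)[OF assms] t curve_lt(2)[OF assms]])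
    show "0 < ?A + (l - ?A)" using lpos by simp
  qed
  have "cc * (X') / M' < 0" if "X' < 0" "0 < M'" for X' M' using cc_pos that by (simp add: divide_neg_pos mult_pos_neg)
  then show ?thesis unfolding VF'_eq[OF A] using X M by blast
qed

lemma VF_mono_gt: assumes "r < l" "x < y" shows "VF x < VF y"
  using assms(2) by (rule DERIV_pos_imp_increasing) (use VF_deriv VF'_pos[OF assms(1)] in blast)

lemma VF_mono_lt: assumes "l < r" "x < y" shows "- VF x < - VF y"
proof (rule DERIV_pos_imp_increasing[OF assms(2)])
  fix z show "\<exists>y. ((\<lambda>x. - VF x) has_real_derivative y) (at z) \<and> 0 < y"
    using DERIV_minus[OF VF_deriv[of z]] VF'_neg[OF assms(1), of z] by fastforce
qed

lemma VF_cont: "isCont VF Q" using VF_deriv by (rule DERIV_isCont)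


definition "C1 = (AM^2 + (k * l + r)^2) / (1 - \<bar>d\<bar>)"

lemma A_bound: assumes Q: "Q \<noteq> 0" shows "\<bar>Aq Q - l\<bar> \<le> C1 / \<bar>Q\<bar>"
proof -
  let ?A = "Aq Q"
  have A: "0 < ?A" "?A < AM" using Aq by auto
  have B: "0 < Bf ?A" "Bf ?A \<le> k * l + r" using Bf_pos[OF A(2)] A kpos by (auto simp: Bf_eq)
  have "?A^2 \<le> AM^2" using A by (intro power_mono) auto
  moreover have "(Bf ?A)^2 \<le> (k * l + r)^2" using B by (intro power_mono) auto
  ultimately have C0: "?A^2 + (Bf ?A)^2 \<le> AM^2 + (k * l + r)^2" by linarith
  have "\<bar>sa Q ?A - sb Q ?A\<bar> \<le> (?A^2 + (Bf ?A)^2) / \<bar>Q\<bar>"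
    unfolding sa_def sb_def by (rule sqrt_diff_bound[OF Q])
  also have "\<dots> \<le> (AM^2 + (k * l + r)^2) / \<bar>Q\<bar>" using C0 Q by (intro divide_right_mono) auto
  finally have D: "\<bar>sa Q ?A - sb Q ?A\<bar> \<le> (AM^2 + (k * l + r)^2) / \<bar>Q\<bar>" .
  have t: "l - ?A = (sa Q ?A - sb Q ?A) - d*Q*(ln (sa Q ?A + d*Q) - ln (sb Q ?A + d*Q))"
    using curve_t[of Q] by (simp add: FF_def algebra_simps)
  have "\<bar>l - ?A\<bar> \<le> (AM^2 + (k * l + r)^2) / ((1 - \<bar>d\<bar>) * \<bar>Q\<bar>)"
    by (rule t_bound[OF dlt Q sa_ge sb_ge t D])
  then show ?thesis by (simp add: C1_def abs_minus_commute field_simps)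
qed

lemma A_lim: assumes F: "F \<le> at_infinity" shows "(Aq \<longlongrightarrow> l) F"
proof (rule tendsto_abs_bound)
  have fi: "filterlim (\<lambda>x::real. x) at_infinity F" by (rule filterlim_mono[OF filterlim_ident F order_refl])
  have ev: "\<forall>\<^sub>F x in F. 1 \<le> \<bar>x::real\<bar>"
    by (rule filter_leD[OF F]) (auto simp: eventually_at_infinity intro!: exI[of _ 1])
  show "\<forall>\<^sub>F x in F. \<bar>Aq x - l\<bar> \<le> \<bar>C1 / x\<bar>" using ev
  proof eventually_elim
    case (elim x)
    then have "x \<noteq> 0" by auto
    have "0 \<le> C1" using dlt by (simp add: C1_def)
    then show ?case using A_bound[OF \<open>x \<noteq> 0\<close>] by simp
  qed
  have "((\<lambda>x. C1 / x) \<longlongrightarrow> 0) F" by (rule tendsto_divide_0[OF tendsto_const fi])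
  then show "((\<lambda>x. \<bar>C1 / x\<bar>) \<longlongrightarrow> 0) F" using tendsto_rabs_zero by blast
qed

lemma PP_pos: assumes Q: "0 < Q" and X: "0 < X"
  shows "PP Q X = (d - 1) * ln Q + d * ln (sqrt (1 + (X/Q)^2) + d) - ln (sqrt (1 + (X/Q)^2) + 1) + (1 - d) * ln X"
proof -
  define s where "s = sqrt (1 + (X/Q)^2)"
  have s1: "1 \<le> s" unfolding s_def by simp
  have S: "sqrt (Q^2 + X^2) = Q * s"
  proof -
    have "Q^2 + X^2 = Q^2 * (1 + (X/Q)^2)" using Q by (simp add: field_simps)
    then show ?thesis using Q by (simp add: s_def real_sqrt_mult)
  qed
  have sd: "0 < s + d" using s1 dlt by (simp add: abs_less_iff)
  have e1: "ln (sqrt (Q^2 + X^2) + d * Q) = ln Q + ln (s + d)"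
  proof -
    have "sqrt (Q^2 + X^2) + d * Q = Q * (s + d)" using S by (simp add: algebra_simps)
    then show ?thesis using Q sd by (simp add: ln_mult)
  qed
  have e2: "ln (sqrt (Q^2 + X^2) - Q) = 2 * ln X - ln Q - ln (s + 1)"
  proof -
    have ss: "s^2 = 1 + (X/Q)^2" unfolding s_def by (simp add: add_nonneg_nonneg)
    have "(Q * s - Q) * (Q * (s + 1)) = Q^2 * (s^2 - 1)" by (simp add: algebra_simps power2_eq_square)
    also have "\<dots> = X^2" using ss Q by (simp add: field_simps)
    finally have F: "(Q * s - Q) * (Q * (s + 1)) = X^2" .
    have nz: "Q * (s + 1) \<noteq> 0" using Q s1 by simp
    have "Q * s - Q = X^2 / (Q * (s + 1))" by (metis F nonzero_mult_div_cancel_right nz)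
    then have "ln (sqrt (Q^2 + X^2) - Q) = ln (X^2) - ln Q - ln (s + 1)"
      using S Q s1 X by (simp add: ln_div ln_mult)
    then show ?thesis using X by (simp add: ln_realpow)
  qed
  show ?thesis unfolding PP_def e1 e2 s_def[symmetric] by (simp add: algebra_simps)
qed

lemma PP_neg: assumes Q: "Q < 0" and X: "0 < X"
  shows "PP Q X = (1 + d) * ln (- Q) + d * ln (sqrt (1 + (X/Q)^2) - d) + ln (sqrt (1 + (X/Q)^2) + 1) - (1 + d) * ln X"
proof -
  define s where "s = sqrt (1 + (X/Q)^2)"
  have s1: "1 \<le> s" unfolding s_def by simp
  have S: "sqrt (Q^2 + X^2) = (- Q) * s"
  proof -
    have "Q^2 + X^2 = Q^2 * (1 + (X/Q)^2)" using Q by (simp add: field_simps)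
    then show ?thesis using Q by (simp add: s_def real_sqrt_mult)
  qed
  have sd: "0 < s - d" using s1 dlt by (simp add: abs_less_iff)
  have e1: "ln (sqrt (Q^2 + X^2) + d * Q) = ln (- Q) + ln (s - d)"
  proof -
    have eq: "sqrt (Q^2 + X^2) + d * Q = (- Q) * (s - d)" using S by (simp add: algebra_simps)
    have h: "ln ((- Q) * (s - d)) = ln (- Q) + ln (s - d)" using Q sd by (intro ln_mult_pos) auto
    show ?thesis unfolding eq h ..
  qed
  have e2: "ln (sqrt (Q^2 + X^2) - Q) = ln (- Q) + ln (s + 1)"
  proof -
    have eq: "sqrt (Q^2 + X^2) - Q = (- Q) * (s + 1)" using S by (simp add: algebra_simps)
    have h: "ln ((- Q) * (s + 1)) = ln (- Q) + ln (s + 1)" using Q s1 by (intro ln_mult_pos) auto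
    show ?thesis unfolding eq h ..
  qed
  show ?thesis unfolding PP_def e1 e2 s_def[symmetric] by (simp add: algebra_simps)
qed


lemma lims:
  assumes F: "F \<le> at_infinity"
  shows "(Aq \<longlongrightarrow> l) F" "((\<lambda>Q. Bf (Aq Q)) \<longlongrightarrow> r) F"
    "((\<lambda>Q. Aq Q / Q) \<longlongrightarrow> 0) F" "((\<lambda>Q. Bf (Aq Q) / Q) \<longlongrightarrow> 0) F"
proof -
  have fi: "filterlim (\<lambda>x::real. x) at_infinity F" by (rule filterlim_mono[OF filterlim_ident F order_refl])
  show A: "(Aq \<longlongrightarrow> l) F" by (rule A_lim[OF F])
  have "((\<lambda>Q. k * (l - Aq Q) + r) \<longlongrightarrow> k * (l - l) + r) F" by (intro tendsto_intros A)
  then show B: "((\<lambda>Q. Bf (Aq Q)) \<longlongrightarrow> r) F" by (simp add: Bf_eq)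
  show "((\<lambda>Q. Aq Q / Q) \<longlongrightarrow> 0) F" by (rule tendsto_divide_0[OF A fi])
  show "((\<lambda>Q. Bf (Aq Q) / Q) \<longlongrightarrow> 0) F" by (rule tendsto_divide_0[OF B fi])
qed

lemma VF_top: "(VF \<longlongrightarrow> ln (l / r)) at_top"
proof -
  note L = lims[OF at_top_le_at_infinity]
  let ?sA = "\<lambda>Q. sqrt (1 + (Aq Q / Q)^2)" and ?sB = "\<lambda>Q. sqrt (1 + (Bf (Aq Q) / Q)^2)"
  let ?E = "\<lambda>Q. d * ln (l / r) + (d * (ln (?sA Q + d) - ln (?sB Q + d)) - (ln (?sA Q + 1) - ln (?sB Q + 1))
      + (1 - d) * (ln (Aq Q) - ln (Bf (Aq Q))))"
  have ev: "\<forall>\<^sub>F Q in at_top. ?E Q = VF Q" using eventually_gt_at_top[of "0::real"]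
  proof eventually_elim
    case (elim Q)
    have A: "0 < Aq Q" "0 < Bf (Aq Q)" using Aq(1,2) Bf_pos by auto
    show ?case unfolding VF_def g1_def PP_pos[OF elim A(1)] PP_pos[OF elim A(2)] by (simp add: algebra_simps)
  qed
  have d1: "1 + d \<noteq> 0" using dlt by (simp add: abs_less_iff)
  have "(?E \<longlongrightarrow> d * ln (l / r) + (d * (ln (sqrt (1 + 0^2) + d) - ln (sqrt (1 + 0^2) + d)) - (ln (sqrt (1 + 0^2) + 1) - ln (sqrt (1 + 0^2) + 1))
      + (1 - d) * (ln l - ln r))) at_top"
    using d1 lpos rpos by (intro tendsto_intros L) (auto simp: add.commute)
  moreover have "d * ln (l / r) + (d * (ln (sqrt (1 + 0^2) + d) - ln (sqrt (1 + 0^2) + d)) - (ln (sqrt (1 + 0^2) + 1) - ln (sqrt (1 + 0^2) + 1))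
      + (1 - d) * (ln l - ln r)) = ln (l / r)" using lpos rpos by (simp add: ln_div algebra_simps)
  ultimately have "(?E \<longlongrightarrow> ln (l / r)) at_top" by simp
  then show ?thesis using tendsto_cong[OF ev] by blast
qed

lemma VF_bot: "(VF \<longlongrightarrow> - ln (l / r)) at_bot"
proof -
  note L = lims[OF at_bot_le_at_infinity]
  let ?sA = "\<lambda>Q. sqrt (1 + (Aq Q / Q)^2)" and ?sB = "\<lambda>Q. sqrt (1 + (Bf (Aq Q) / Q)^2)"
  let ?E = "\<lambda>Q. d * ln (l / r) + (d * (ln (?sA Q - d) - ln (?sB Q - d)) + (ln (?sA Q + 1) - ln (?sB Q + 1))
      - (1 + d) * (ln (Aq Q) - ln (Bf (Aq Q))))"
  have ev: "\<forall>\<^sub>F Q in at_bot. ?E Q = VF Q" using eventually_gt_at_bot[of "0::real"]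
  proof eventually_elim
    case (elim Q)
    have A: "0 < Aq Q" "0 < Bf (Aq Q)" using Aq(1,2) Bf_pos by auto
    show ?case unfolding VF_def g1_def PP_neg[OF elim A(1)] PP_neg[OF elim A(2)] by (simp add: algebra_simps)
  qed
  have d1: "1 - d \<noteq> 0" using dlt by (simp add: abs_less_iff)
  have "(?E \<longlongrightarrow> d * ln (l / r) + (d * (ln (sqrt (1 + 0^2) - d) - ln (sqrt (1 + 0^2) - d)) + (ln (sqrt (1 + 0^2) + 1) - ln (sqrt (1 + 0^2) + 1))
      - (1 + d) * (ln l - ln r))) at_bot"
    using d1 lpos rpos by (intro tendsto_intros L) auto
  moreover have "d * ln (l / r) + (d * (ln (sqrt (1 + 0^2) - d) - ln (sqrt (1 + 0^2) - d)) + (ln (sqrt (1 + 0^2) + 1) - ln (sqrt (1 + 0^2) + 1))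
      - (1 + d) * (ln l - ln r)) = - ln (l / r)" using lpos rpos by (simp add: ln_div algebra_simps)
  ultimately have "(?E \<longlongrightarrow> - ln (l / r)) at_bot" by simp
  then show ?thesis using tendsto_cong[OF ev] by blast
qed


lemma rev_VF: "reversal_charge l r al be d V Q \<longleftrightarrow> VF Q = V"
  using rev_iff by (simp add: VF_def)

lemma main: "(\<exists>!Q. reversal_charge l r al be d V Q) \<longleftrightarrow> \<bar>V\<bar> < \<bar>ln (l / r)\<bar>"
proof -
  consider "l = r" | "r < l" | "l < r" by linarith
  then show ?thesis
  proof cases
    case 1
    have VF0: "VF Q = 0" for Q
    proof -
      have "Aq Q = l" by (rule curve_eq[OF 1])
      moreover have "Bf l = k * (l - l) + r" by (rule Bf_eq)
      moreover have "k * (l - l) = 0" by simp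
      ultimately have "Bf l = l" using 1 by linarith
      then have B: "Bf (Aq Q) = Aq Q" using \<open>Aq Q = l\<close> by simp
      have "l / r = 1" using 1 lpos by simp
      then have L: "ln (l / r) = 0" by simp
      show ?thesis by (simp add: VF_def g1_def B L)
    qed
    have "\<not> (\<exists>!Q. VF Q = V)"
    proof
      assume "\<exists>!Q. VF Q = V"
      then have "V = 0" using VF0 by auto
      then have "VF 0 = V" "VF 1 = V" using VF0 by auto
      with \<open>\<exists>!Q. VF Q = V\<close> show False by (metis zero_neq_one)
    qed
    moreover have "ln (l / r) = 0"
    proof -
      have "l / r = 1" using 1 lpos by simp
      then show ?thesis by simp
    qed
    ultimately show ?thesis using rev_VF by simp
  next
    case 2
    have c: "0 < ln (l / r)" using 2 rpos by simp
    have "(\<exists>!Q. VF Q = V) \<longleftrightarrow> \<bar>V\<bar> < ln (l / r)"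
      by (rule unique_iff_range[OF VF_cont VF_mono_gt[OF 2] VF_top VF_bot])
    then show ?thesis using rev_VF c by simp
  next
    case 3
    have c: "ln (l / r) < 0" using 3 lpos by simp
    have top: "((\<lambda>Q. - VF Q) \<longlongrightarrow> - ln (l / r)) at_top" by (intro tendsto_intros VF_top)
    have bot: "((\<lambda>Q. - VF Q) \<longlongrightarrow> - (- ln (l / r))) at_bot" by (intro tendsto_intros VF_bot)
    have "(\<exists>!Q. - VF Q = - V) \<longleftrightarrow> \<bar>- V\<bar> < - ln (l / r)"
      by (rule unique_iff_range[OF _ VF_mono_lt[OF 3] top bot]) (intro continuous_intros VF_cont)
    then show ?thesis using rev_VF c by simp
  qed
qed

end

theorem theorem3p13:
  fixes l r \<alpha> \<beta> D1 D2 V :: real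
  assumes "l > 0" and "r > 0"
    and "0 < \<alpha>" and "\<alpha> < \<beta>" and "\<beta> < 1"
    and "D1 > 0" and "D2 > 0"
  shows "(\<exists>!Q0. reversal_charge l r \<alpha> \<beta> ((D2 - D1) / (D2 + D1)) V Q0)
         \<longleftrightarrow> \<bar>V\<bar> < \<bar>ln (l / r)\<bar>"
proof -
  have "\<bar>(D2 - D1) / (D2 + D1)\<bar> < 1" using assms(6,7) by (simp add: abs_less_iff field_simps)
  then interpret pnp l r \<alpha> \<beta> "(D2 - D1) / (D2 + D1)"
    using assms by unfold_locales auto
  show ?thesis by (rule main)
qed

end
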